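(* Let $A$ be a system of $n_A$ qubits and $B$ a system of $n_B$ qubits, and let $\mathcal{P}$ be a CPTP map from operators on $H_{A_1}\otimes H_{B_1}$ (time $t_1$) to operators on $H_{A_2}\otimes H_{B_2}$ (time $t_2$) that allows signalling in neither direction, i.e. there exist completely positive maps $\mathcal{T}$ (from $A_1$ to $A_2$) and $\mathcal{S}$ (from $B_1$ to $B_2$) with $\mathrm{Tr}_{B_2}\mathcal{P}(\rho)=\mathcal{T}(\mathrm{Tr}_{B_1}\rho)$ and $\mathrm{Tr}_{A_2}\mathcal{P}(\rho)=\mathcal{S}(\mathrm{Tr}_{A_1}\rho)$ for all states $\rho$ on $H_{A_1}\otimes H_{B_1}$. Then for every state $\rho_{A_1B_1}$ at time $t_1$, the pseudo-density matrices $R_{B_1A_2}$ and $R_{A_1B_2}$ are positive semidefinite and $f(R_{B_1A_2})=f(R_{A_1B_2})=0$.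
   Context: Pauli matrices $\sigma_0=\mathbb{1},\sigma_1,\sigma_2,\sigma_3$; multi-qubit Pauli matrices are tensor products of these. The coarse-grained measurement of a Pauli matrix $\Sigma$ on the full system $AB$ is the projective measurement $\{(\mathbb{1}\pm\Sigma)/2\}$ with outcomes $\pm1$ and Lüders update $\rho\mapsto P_\pm\rho P_\pm$. For an $n_B$-qubit Pauli $\tilde\sigma_j$ and an $n_A$-qubit Pauli $\tilde\sigma_k$: $\langle\tilde\sigma_j^{B_1},\tilde\sigma_k^{A_2}\rangle$ is the expected product of outcomes in the experiment: prepare $\rho_{A_1B_1}$, coarse-grained measurement of $\mathbb{1}_A\otimes\tilde\sigma_j$ at $t_1$, apply $\mathcal{P}$, coarse-grained measurement of $\tilde\sigma_k\otimes\mathbb{1}_B$ at $t_2$; and $R_{B_1A_2}=2^{-(n_A+n_B)}\sum_{j,k}\langle\tilde\sigma_j^{B_1},\tilde\sigma_k^{A_2}\rangle\,\tilde\sigma_j\otimes\tilde\sigma_k$. Analogously, $R_{A_1B_2}=2^{-(n_A+n_B)}\sum_{i,l}\langle\tilde\sigma_i^{A_1},\tilde\sigma_l^{B_2}\rangle\,\tilde\sigma_i\otimes\tilde\sigma_l$ with measurement of $\tilde\sigma_i\otimes\mathbb{1}_B$ at $t_1$ and $\mathbb{1}_A\otimes\tilde\sigma_l$ at $t_2$. The PDM negativity is $f(R)=\mathrm{Tr}\sqrt{RR^\dagger}-1$. *)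

theory Defs
  imports Complex_Main "Jordan_Normal_Form.Matrix"
begin

definition kron :: "complex mat \<Rightarrow> complex mat \<Rightarrow> complex mat" where
  "kron A B = mat (dim_row A * dim_row B) (dim_col A * dim_col B)
     (\<lambda>(i,j). A $$ (i div dim_row B, j div dim_col B) * B $$ (i mod dim_row B, j mod dim_col B))"

definition madj :: "complex mat \<Rightarrow> complex mat" where
  "madj A = mat (dim_col A) (dim_row A) (\<lambda>(i,j). cnj (A $$ (j,i)))"

definition mtrace :: "complex mat \<Rightarrow> complex" where
  "mtrace M = (\<Sum>i<dim_row M. M $$ (i,i))"

definition psd :: "nat \<Rightarrow> complex mat \<Rightarrow> bool" where
  "psd n M \<longleftrightarrow> M \<in> carrier_mat n n \<and> madj M = M \<and>
     (\<forall>v\<in>carrier_vec n. 0 \<le> Re ((M *\<^sub>v v) \<bullet>c v))"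

definition density :: "nat \<Rightarrow> complex mat \<Rightarrow> bool" where
  "density n \<rho> \<longleftrightarrow> psd n \<rho> \<and> mtrace \<rho> = 1"

definition msqrt :: "nat \<Rightarrow> complex mat \<Rightarrow> complex mat" where
  "msqrt n M = (THE S. psd n S \<and> S * S = M)"

definition pdm_neg :: "nat \<Rightarrow> complex mat \<Rightarrow> complex" where
  "pdm_neg n R = mtrace (msqrt n (R * madj R)) - 1"

definition pauli :: "nat \<Rightarrow> complex mat" where
  "pauli k = mat 2 2 (\<lambda>(i,j).
     if k = 0 then (if i = j then 1 else 0)
     else if k = 1 then (if i \<noteq> j then 1 else 0)
     else if k = 2 then (if i = 0 \<and> j = 1 then - \<i> else if i = 1 \<and> j = 0 then \<i> else 0)
     else (if i = j then (if i = 0 then 1 else -1) else 0))"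

fun pauli_str :: "nat list \<Rightarrow> complex mat" where
  "pauli_str [] = 1\<^sub>m 1"
| "pauli_str (k # ks) = kron (pauli k) (pauli_str ks)"

definition pauli_idx :: "nat \<Rightarrow> nat list set" where
  "pauli_idx n = {ks. length ks = n \<and> set ks \<subseteq> {..<4}}"

section \<open>Bipartite system A (x) B, dimensions dA, dB; index (a,b) \<mapsto> a*dB+b\<close>

definition ptrace_B :: "nat \<Rightarrow> nat \<Rightarrow> complex mat \<Rightarrow> complex mat" where
  "ptrace_B dA dB M = mat dA dA (\<lambda>(i,j). \<Sum>k<dB. M $$ (i*dB+k, j*dB+k))"

definition ptrace_A :: "nat \<Rightarrow> nat \<Rightarrow> complex mat \<Rightarrow> complex mat" where
  "ptrace_A dA dB M = mat dB dB (\<lambda>(i,j). \<Sum>k<dA. M $$ (k*dB+i, k*dB+j))"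

definition linear_op :: "nat \<Rightarrow> nat \<Rightarrow> (complex mat \<Rightarrow> complex mat) \<Rightarrow> bool" where
  "linear_op din dout \<Phi> \<longleftrightarrow>
     (\<forall>X\<in>carrier_mat din din. \<Phi> X \<in> carrier_mat dout dout) \<and>
     (\<forall>X\<in>carrier_mat din din. \<forall>Y\<in>carrier_mat din din. \<Phi> (X + Y) = \<Phi> X + \<Phi> Y) \<and>
     (\<forall>c. \<forall>X\<in>carrier_mat din din. \<Phi> (c \<cdot>\<^sub>m X) = c \<cdot>\<^sub>m \<Phi> X)"

text \<open>(id_k (x) Phi)(X): Phi applied to each din x din block of a (k*din) x (k*din) matrix\<close>
definition ampl :: "nat \<Rightarrow> nat \<Rightarrow> nat \<Rightarrow> (complex mat \<Rightarrow> complex mat) \<Rightarrow> complex mat \<Rightarrow> complex mat" where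
  "ampl k din dout \<Phi> X = mat (k*dout) (k*dout) (\<lambda>(i,j).
     \<Phi> (mat din din (\<lambda>(p,q). X $$ ((i div dout)*din + p, (j div dout)*din + q))) $$ (i mod dout, j mod dout))"

definition cp_map :: "nat \<Rightarrow> nat \<Rightarrow> (complex mat \<Rightarrow> complex mat) \<Rightarrow> bool" where
  "cp_map din dout \<Phi> \<longleftrightarrow> linear_op din dout \<Phi> \<and>
     (\<forall>k X. psd (k*din) X \<longrightarrow> psd (k*dout) (ampl k din dout \<Phi> X))"

definition cptp_map :: "nat \<Rightarrow> nat \<Rightarrow> (complex mat \<Rightarrow> complex mat) \<Rightarrow> bool" where
  "cptp_map din dout \<Phi> \<longleftrightarrow> cp_map din dout \<Phi> \<and>
     (\<forall>X\<in>carrier_mat din din. mtrace (\<Phi> X) = mtrace X)"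

definition no_signalling :: "nat \<Rightarrow> nat \<Rightarrow> (complex mat \<Rightarrow> complex mat) \<Rightarrow> bool" where
  "no_signalling dA dB P \<longleftrightarrow> (\<exists>T S. cp_map dA dA T \<and> cp_map dB dB S \<and>
     (\<forall>\<rho>. density (dA*dB) \<rho> \<longrightarrow>
        ptrace_B dA dB (P \<rho>) = T (ptrace_B dA dB \<rho>) \<and>
        ptrace_A dA dB (P \<rho>) = S (ptrace_A dA dB \<rho>)))"

definition proj :: "nat \<Rightarrow> complex mat \<Rightarrow> real \<Rightarrow> complex mat" where
  "proj d \<Sigma> s = complex_of_real (1/2) \<cdot>\<^sub>m (1\<^sub>m d + complex_of_real s \<cdot>\<^sub>m \<Sigma>)"

text \<open>Expected product of outcomes: measure Sigma1 (Lueders update), apply P, measure Sigma2.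
  The joint probability of outcomes (s,t) is Tr(Q_t P(P_s rho P_s)).\<close>
definition corr :: "nat \<Rightarrow> (complex mat \<Rightarrow> complex mat) \<Rightarrow> complex mat \<Rightarrow> complex mat \<Rightarrow> complex mat \<Rightarrow> real" where
  "corr d P \<Sigma>1 \<Sigma>2 \<rho> = (\<Sum>s\<in>{1,-1::real}. \<Sum>t\<in>{1,-1::real}.
     s * t * Re (mtrace (proj d \<Sigma>2 t * P (proj d \<Sigma>1 s * \<rho> * proj d \<Sigma>1 s))))"

definition R_B1A2 :: "nat \<Rightarrow> nat \<Rightarrow> (complex mat \<Rightarrow> complex mat) \<Rightarrow> complex mat \<Rightarrow> complex mat" where
  "R_B1A2 nA nB P \<rho> = mat (2^nB * 2^nA) (2^nB * 2^nA) (\<lambda>(a,b).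
     \<Sum>j\<in>pauli_idx nB. \<Sum>k\<in>pauli_idx nA.
       complex_of_real (corr (2^nA * 2^nB) P (kron (1\<^sub>m (2^nA)) (pauli_str j))
                                             (kron (pauli_str k) (1\<^sub>m (2^nB))) \<rho> / 2^(nA+nB))
       * kron (pauli_str j) (pauli_str k) $$ (a,b))"

definition R_A1B2 :: "nat \<Rightarrow> nat \<Rightarrow> (complex mat \<Rightarrow> complex mat) \<Rightarrow> complex mat \<Rightarrow> complex mat" where
  "R_A1B2 nA nB P \<rho> = mat (2^nA * 2^nB) (2^nA * 2^nB) (\<lambda>(a,b).
     \<Sum>i\<in>pauli_idx nA. \<Sum>l\<in>pauli_idx nB.
       complex_of_real (corr (2^nA * 2^nB) P (kron (pauli_str i) (1\<^sub>m (2^nB)))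
                                             (kron (1\<^sub>m (2^nA)) (pauli_str l)) \<rho> / 2^(nA+nB))
       * kron (pauli_str i) (pauli_str l) $$ (a,b))"

end

theory Submission
  imports Defs "Jordan_Normal_Form.Schur_Decomposition"
begin
lemma sum_split: "(\<Sum>i<m*n. f i) = (\<Sum>a<m. \<Sum>b<n. f (a*n+b :: nat))"
proof (induction m)
  case 0 then show ?case by simp
next
  case (Suc m)
  have e: "{..<Suc m * n} = {..<m*n} \<union> {m*n..<m*n+n}" by auto
  have "(\<Sum>i<Suc m*n. f i) = (\<Sum>i<m*n. f i) + (\<Sum>i\<in>{m*n..<m*n+n}. f i)"
    unfolding e by (rule sum.union_disjoint) auto
  also have "(\<Sum>i\<in>{m*n..<m*n+n}. f i) = (\<Sum>b<n. f (m*n+b))"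
    using sum.shift_bounds_nat_ivl[of f 0 "m*n" n] by (simp add: atLeast0LessThan ac_simps)
  finally show ?case using Suc by simp
qed

lemma kron_dim[simp]: "dim_row (kron A B) = dim_row A * dim_row B" "dim_col (kron A B) = dim_col A * dim_col B"
  unfolding kron_def by simp_all
lemma kron_carrier: "A \<in> carrier_mat r1 c1 \<Longrightarrow> B \<in> carrier_mat r2 c2 \<Longrightarrow> kron A B \<in> carrier_mat (r1*r2) (c1*c2)"
  unfolding carrier_mat_def by simp
lemma kron_index: "i < dim_row A * dim_row B \<Longrightarrow> j < dim_col A * dim_col B \<Longrightarrow>
  kron A B $$ (i,j) = A $$ (i div dim_row B, j div dim_col B) * B $$ (i mod dim_row B, j mod dim_col B)"
  unfolding kron_def by (subst index_mat) auto
lemma pauli_carrier[simp]: "pauli k \<in> carrier_mat 2 2"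
  unfolding pauli_def by simp

lemma pauli_dim[simp]: "dim_row (pauli k) = 2" "dim_col (pauli k) = 2"
  by (rule carrier_matD[OF pauli_carrier])+

lemma pauli_str_carrier[simp]: "pauli_str ks \<in> carrier_mat (2^length ks) (2^length ks)"
proof (induction ks)
  case Nil then show ?case by simp
next
  case (Cons k ks)
  have "kron (pauli k) (pauli_str ks) \<in> carrier_mat (2 * 2^length ks) (2 * 2^length ks)"
    by (rule kron_carrier[OF pauli_carrier Cons])
  then show ?case by simp
qed

lemma pauli_str_dim[simp]: "dim_row (pauli_str ks) = 2^length ks" "dim_col (pauli_str ks) = 2^length ks"
  by (rule carrier_matD[OF pauli_str_carrier])+



lemma less2: "(b::nat) < 2 \<Longrightarrow> b = 0 \<or> b = 1" by auto

lemma pauli_entry: "i < 2 \<Longrightarrow> j < 2 \<Longrightarrow> pauli k $$ (i,j) = 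
     (if k = 0 then (if i = j then 1 else 0)
     else if k = 1 then (if i \<noteq> j then 1 else 0)
     else if k = 2 then (if i = 0 \<and> j = 1 then - \<i> else if i = 1 \<and> j = 0 then \<i> else 0)
     else (if i = j then (if i = 0 then 1 else -1) else 0))"
  unfolding pauli_def by (subst index_mat) auto

lemma pauli1_sum: assumes "b < 2" "b' < 2" "c < 2" "c' < 2"
  shows "(\<Sum>k<4. pauli k $$ (b,b') * pauli k $$ (c,c')) = (if b = c' \<and> b' = c then 2 else 0)"
proof -
  have e: "{..<4::nat} = {0,1,2,3}" by auto
  have s: "(\<Sum>k<4. pauli k $$ (b,b') * pauli k $$ (c,c')) = pauli 0 $$ (b,b') * pauli 0 $$ (c,c') +
     pauli 1 $$ (b,b') * pauli 1 $$ (c,c') + pauli 2 $$ (b,b') * pauli 2 $$ (c,c') + pauli 3 $$ (b,b') * pauli 3 $$ (c,c')"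
    unfolding e by simp
  show ?thesis unfolding s using less2[OF assms(1)] less2[OF assms(2)] less2[OF assms(3)] less2[OF assms(4)] assms
    by (elim disjE) (simp_all add: pauli_entry)
qed
lemma finite_pauli_idx[simp]: "finite (pauli_idx n)"
proof -
  have "pauli_idx n = {xs. set xs \<subseteq> {..<4} \<and> length xs = n}" by (auto simp: pauli_idx_def)
  then show ?thesis using finite_lists_length_eq[of "{..<4::nat}" n] by simp
qed

lemma pauli_idx_Suc: "pauli_idx (Suc n) = (\<lambda>(k,ks). k#ks) ` ({..<4} \<times> pauli_idx n)"
proof
  show "pauli_idx (Suc n) \<subseteq> (\<lambda>(k,ks). k#ks) ` ({..<4} \<times> pauli_idx n)"
  proof
    fix xs assume "xs \<in> pauli_idx (Suc n)"
    then obtain k ks where "xs = k#ks" "k < 4" "ks \<in> pauli_idx n"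
      by (cases xs) (auto simp: pauli_idx_def)
    then show "xs \<in> (\<lambda>(k,ks). k#ks) ` ({..<4} \<times> pauli_idx n)" by force
  qed
qed (auto simp: pauli_idx_def)

lemma pauli_sum: assumes "b < 2^n" "b' < 2^n" "c < 2^n" "c' < 2^n"
  shows "(\<Sum>ks\<in>pauli_idx n. pauli_str ks $$ (b,b') * pauli_str ks $$ (c,c')) = (if b = c' \<and> b' = c then 2^n else 0)"
  using assms
proof (induction n arbitrary: b b' c c')
  case 0
  have "pauli_idx 0 = {[]}" by (auto simp: pauli_idx_def)
  then show ?case using 0 by simp
next
  case (Suc n)
  define D :: nat where "D = 2^n"
  have D: "D > 0" by (simp add: D_def)
  have lt: "x div D < 2" "x mod D < D" if "x < 2^Suc n" for x
    using that D by (auto simp: D_def less_mult_imp_div_less)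
  have "(\<Sum>ks\<in>pauli_idx (Suc n). pauli_str ks $$ (b,b') * pauli_str ks $$ (c,c'))
     = (\<Sum>p\<in>{..<4} \<times> pauli_idx n. pauli_str (fst p # snd p) $$ (b,b') * pauli_str (fst p # snd p) $$ (c,c'))"
    unfolding pauli_idx_Suc by (subst sum.reindex) (auto simp: inj_on_def case_prod_beta)
  also have "\<dots> = (\<Sum>k<4. \<Sum>ks\<in>pauli_idx n. (pauli k $$ (b div D, b' div D) * pauli k $$ (c div D, c' div D))
        * (pauli_str ks $$ (b mod D, b' mod D) * pauli_str ks $$ (c mod D, c' mod D)))"
    unfolding sum.cartesian_product
    using Suc.prems by (intro sum.cong refl) (auto simp: pauli_idx_def kron_index D_def)
  also have "\<dots> = (\<Sum>k<4. pauli k $$ (b div D, b' div D) * pauli k $$ (c div D, c' div D))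
        * (\<Sum>ks\<in>pauli_idx n. pauli_str ks $$ (b mod D, b' mod D) * pauli_str ks $$ (c mod D, c' mod D))"
    by (simp only: sum_product)
  also have "\<dots> = (if b div D = c' div D \<and> b' div D = c div D then 2 else 0) *
                   (if b mod D = c' mod D \<and> b' mod D = c mod D then 2^n else 0)"
    using Suc.prems lt by (simp add: pauli1_sum Suc.IH[unfolded D_def[symmetric]] D_def)
  also have "\<dots> = (if b = c' \<and> b' = c then 2^Suc n else 0)"
    by (auto simp: D_def) (metis div_mult_mod_eq)+
  finally show ?case .
qed

lemma madj_dim[simp]: "dim_row (madj A) = dim_col A" "dim_col (madj A) = dim_row A"
  unfolding madj_def by simp_all

lemma madj_index[simp]: "i < dim_col A \<Longrightarrow> j < dim_row A \<Longrightarrow> madj A $$ (i,j) = cnj (A $$ (j,i))"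
  unfolding madj_def by (subst index_mat) auto

lemma madj_carrier: "A \<in> carrier_mat n m \<Longrightarrow> madj A \<in> carrier_mat m n"
  unfolding carrier_mat_def by simp

lemma herm_entry: assumes "madj M = M" "M \<in> carrier_mat n n" "i < n" "j < n"
  shows "M $$ (i,j) = cnj (M $$ (j,i))"
proof -
  have "madj M $$ (i,j) = cnj (M $$ (j,i))" using assms(2-4) by simp
  then show ?thesis using assms(1) by simp
qed

lemma cinner_sum: "v \<in> carrier_vec n \<Longrightarrow> w \<in> carrier_vec n \<Longrightarrow> v \<bullet>c w = (\<Sum>i<n. v$i * cnj (w$i))"
  unfolding scalar_prod_def by (simp add: atLeast0LessThan)

lemma mulv_index: "M \<in> carrier_mat n m \<Longrightarrow> v \<in> carrier_vec m \<Longrightarrow> i < n \<Longrightarrow> (M *\<^sub>v v) $ i = (\<Sum>j<m. M $$ (i,j) * v $ j)"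
  by (simp add: scalar_prod_def atLeast0LessThan)

lemma herm_inner: assumes M: "M \<in> carrier_mat n n" "madj M = M" and v: "v \<in> carrier_vec n" and w: "w \<in> carrier_vec n"
  shows "(M *\<^sub>v w) \<bullet>c v = w \<bullet>c (M *\<^sub>v v)"
proof -
  have "(M *\<^sub>v w) \<bullet>c v = (\<Sum>i<n. (\<Sum>j<n. M $$ (i,j) * w $ j) * cnj (v$i))"
    using M v w by (simp add: cinner_sum[of _ n] mulv_index del: index_mult_mat_vec)
  also have "\<dots> = (\<Sum>i<n. \<Sum>j<n. w $ j * cnj (M $$ (j,i)) * cnj (v$i))"
  proof (rule sum.cong[OF refl])
    fix i assume i: "i \<in> {..<n}"
    show "(\<Sum>j<n. M $$ (i,j) * w $ j) * cnj (v$i) = (\<Sum>j<n. w $ j * cnj (M $$ (j,i)) * cnj (v$i))"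
      unfolding sum_distrib_right
    proof (rule sum.cong[OF refl])
      fix j assume j: "j \<in> {..<n}"
      have "M $$ (i,j) = cnj (M $$ (j,i))" by (rule herm_entry[OF M(2) M(1)]) (use i j in auto)
      then show "M $$ (i,j) * w $ j * cnj (v$i) = w $ j * cnj (M $$ (j,i)) * cnj (v$i)" by simp
    qed
  qed
  also have "\<dots> = (\<Sum>j<n. \<Sum>i<n. w $ j * cnj (M $$ (j,i)) * cnj (v$i))"
    by (rule sum.swap)
  also have "\<dots> = w \<bullet>c (M *\<^sub>v v)"
    using M v w by (simp add: cinner_sum[of _ n] mulv_index cnj_sum sum_distrib_left mult_ac del: index_mult_mat_vec)
  finally show ?thesis .
qed

lemma cinner_self_real: "v \<in> carrier_vec n \<Longrightarrow> v \<bullet>c v = complex_of_real (Re (v \<bullet>c v)) \<and> Re (v \<bullet>c v) \<ge> 0"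
  using conjugate_square_ge_0_vec[of v] by (simp add: less_eq_complex_def complex_eq_iff)

lemma herm_quad_real: assumes "M \<in> carrier_mat n n" "madj M = M" "v \<in> carrier_vec n"
  shows "(M *\<^sub>v v) \<bullet>c v = complex_of_real (Re ((M *\<^sub>v v) \<bullet>c v))"
proof -
  have "(M *\<^sub>v v) \<bullet>c v = v \<bullet>c (M *\<^sub>v v)" by (rule herm_inner[OF assms(1,2,3,3)])
  also have "\<dots> = cnj ((M *\<^sub>v v) \<bullet>c v)"
    using assms by (simp add: cinner_sum[of _ n] cnj_sum mult.commute)
  finally have h: "(M *\<^sub>v v) \<bullet>c v = cnj ((M *\<^sub>v v) \<bullet>c v)" .
  have "Im ((M *\<^sub>v v) \<bullet>c v) = 0" using arg_cong[where f=Im, OF h] by simp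
  then show ?thesis by (simp add: complex_eq_iff)
qed


lemma psd_zero: assumes psd: "psd n M" and v: "v \<in> carrier_vec n" and q0: "Re ((M *\<^sub>v v) \<bullet>c v) = 0"
  shows "M *\<^sub>v v = 0\<^sub>v n"
proof -
  have M: "M \<in> carrier_mat n n" "madj M = M" and pos: "\<And>w. w \<in> carrier_vec n \<Longrightarrow> 0 \<le> Re ((M *\<^sub>v w) \<bullet>c w)"
    using psd unfolding psd_def by auto
  define u where "u = M *\<^sub>v v"
  have u: "u \<in> carrier_vec n" using M v by (simp add: u_def)
  have Mu: "M *\<^sub>v u \<in> carrier_vec n" using M u by simp
  define a where "a = Re (u \<bullet>c u)"
  define b where "b = Re ((M *\<^sub>v u) \<bullet>c u)"
  have a: "a \<ge> 0" "u \<bullet>c u = complex_of_real a" using cinner_self_real[OF u] by (auto simp: a_def)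
  have b: "b \<ge> 0" using pos[OF u] by (simp add: b_def)
  have Muv: "(M *\<^sub>v u) \<bullet>c v = u \<bullet>c u" unfolding u_def by (rule herm_inner[OF M v]) (use M v in simp)
  have key: "0 \<le> 2*t*a + t^2 * b" for t :: real
  proof -
    define x where "x = v + complex_of_real t \<cdot>\<^sub>v u"
    have x: "x \<in> carrier_vec n" using v u by (simp add: x_def)
    have Mx: "M *\<^sub>v x = u + complex_of_real t \<cdot>\<^sub>v (M *\<^sub>v u)"
      unfolding x_def u_def using M v by (simp add: mult_add_distrib_mat_vec[of M n n] mult_mat_vec[of M n n])
    have dims: "dim_vec u = n" "dim_vec v = n" "dim_vec (M *\<^sub>v u) = n" using u v Mu M by auto
    have Mxc: "M *\<^sub>v x \<in> carrier_vec n" using M x by simp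
    have "(M *\<^sub>v x) \<bullet>c x = (\<Sum>i<n. (u$i + complex_of_real t * (M *\<^sub>v u)$i) * cnj (v$i + complex_of_real t * u$i))"
      unfolding cinner_sum[OF Mxc x] by (intro sum.cong refl) (use dims in \<open>simp add: Mx, simp add: x_def\<close>)
    also have "\<dots> = (u \<bullet>c v) + complex_of_real t * (u \<bullet>c u) + complex_of_real t * ((M *\<^sub>v u) \<bullet>c v)
        + complex_of_real (t^2) * ((M *\<^sub>v u) \<bullet>c u)"
      unfolding cinner_sum[OF u v] cinner_sum[OF u u] cinner_sum[OF Mu v] cinner_sum[OF Mu u]
      by (simp add: sum.distrib sum_distrib_left algebra_simps power2_eq_square)
    finally have "(M *\<^sub>v x) \<bullet>c x = (u \<bullet>c v) + complex_of_real t * (u \<bullet>c u) + complex_of_real t * ((M *\<^sub>v u) \<bullet>c v)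
        + complex_of_real (t^2) * ((M *\<^sub>v u) \<bullet>c u)" .
    then have "Re ((M *\<^sub>v x) \<bullet>c x) = 2*t*a + t^2 * b"
      using q0 unfolding Muv a(2) by (simp add: u_def[symmetric] b_def)
    then show ?thesis using pos[OF x] by simp
  qed
  have "a = 0"
  proof (rule ccontr)
    assume "a \<noteq> 0"
    then have ap: "a > 0" using a by simp
    define t where "t = - a / (b+1)"
    have k: "0 \<le> 2*t*a + t^2 * b" by (rule key)
    have hb: "b + 1 > 0" using b by simp
    have tn: "t < 0" unfolding t_def using ap hb by simp
    have "t * b = - a * (b / (b+1))" unfolding t_def by simp
    moreover have "b / (b+1) \<le> 1" using hb by simp
    then have "a * (b / (b+1)) \<le> a * 1" using ap by (intro mult_left_mono) auto
    ultimately have "t * b \<ge> - a" by simp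
    then have "2*a + t*b > 0" using ap by simp
    then have "t * (2*a + t*b) < 0" using tn by (simp add: mult_neg_pos)
    moreover have "2*t*a + t^2 * b = t * (2*a + t*b)" by (simp add: algebra_simps power2_eq_square)
    ultimately have False using k by simp
    then show False .
  qed
  then have "u \<bullet>c u = 0" using a by simp
  then show ?thesis using u by (simp add: u_def)
qed

lemma psd_herm_quad: assumes "psd n M" "v \<in> carrier_vec n"
  shows "(M *\<^sub>v v) \<bullet>c v = complex_of_real (Re ((M *\<^sub>v v) \<bullet>c v)) \<and> Re ((M *\<^sub>v v) \<bullet>c v) \<ge> 0"
  using assms herm_quad_real[of M n v] unfolding psd_def by auto

lemma sqrt_eig_zero: fixes x :: "complex vec" assumes S: "psd n S" and T: "psd n T" and ST: "S * S = T * T"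
  and ev: "eigenvector (S - T) x \<mu>"
  shows "\<mu> = 0"
proof (rule ccontr)
  assume mu0: "\<mu> \<noteq> 0"
  have Sc: "S \<in> carrier_mat n n" "madj S = S" and Tc: "T \<in> carrier_mat n n" "madj T = T"
    using S T unfolding psd_def by auto
  have x: "x \<in> carrier_vec n" "x \<noteq> 0\<^sub>v n" and Dx: "(S - T) *\<^sub>v x = \<mu> \<cdot>\<^sub>v x"
    using ev Sc Tc unfolding eigenvector_def by auto
  define s where "s = S *\<^sub>v x"
  define t where "t = T *\<^sub>v x"
  have sc: "s \<in> carrier_vec n" and tc: "t \<in> carrier_vec n" using Sc Tc x by (auto simp: s_def t_def)
  have "s - t = \<mu> \<cdot>\<^sub>v x" using Dx unfolding s_def t_def using Sc Tc x
    by (simp add: minus_mult_distrib_mat_vec[of S n n T])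
  then have sti: "s $ i = t $ i + \<mu> * x $ i" if "i < n" for i
  proof -
    have dd: "dim_vec t = n" "dim_vec x = n" using tc x by auto
    have "(s - t) $ i = (\<mu> \<cdot>\<^sub>v x) $ i" using \<open>s - t = \<mu> \<cdot>\<^sub>v x\<close> by simp
    moreover have "(s - t) $ i = s$i - t$i" using that dd by simp
    moreover have "(\<mu> \<cdot>\<^sub>v x) $ i = \<mu> * x$i" using that dd by simp
    ultimately show ?thesis by (simp add: algebra_simps)
  qed
  have "s \<bullet>c s = t \<bullet>c t"
  proof -
    have "s \<bullet>c s = (S *\<^sub>v s) \<bullet>c x" unfolding s_def by (rule herm_inner[OF Sc x(1), symmetric]) (use Sc x in simp)
    also have "\<dots> = ((S * S) *\<^sub>v x) \<bullet>c x" unfolding s_def using Sc x by simp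
    also have "\<dots> = ((T * T) *\<^sub>v x) \<bullet>c x" using ST by simp
    also have "\<dots> = (T *\<^sub>v t) \<bullet>c x" unfolding t_def using Tc x by simp
    also have "\<dots> = t \<bullet>c t" unfolding t_def by (rule herm_inner[OF Tc x(1)]) (use Tc x in simp)
    finally show ?thesis .
  qed
  moreover have "s \<bullet>c s = t \<bullet>c t + cnj \<mu> * (t \<bullet>c x) + \<mu> * (x \<bullet>c t) + \<mu> * cnj \<mu> * (x \<bullet>c x)"
  proof -
    have "s \<bullet>c s = (\<Sum>i<n. (t$i + \<mu> * x$i) * cnj (t$i + \<mu> * x$i))"
      unfolding cinner_sum[OF sc sc] by (intro sum.cong refl) (simp add: sti)
    also have "\<dots> = t \<bullet>c t + cnj \<mu> * (t \<bullet>c x) + \<mu> * (x \<bullet>c t) + \<mu> * cnj \<mu> * (x \<bullet>c x)"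
      unfolding cinner_sum[OF tc tc] cinner_sum[OF tc x(1)] cinner_sum[OF x(1) tc] cinner_sum[OF x(1) x(1)]
      by (simp add: sum.distrib sum_distrib_left algebra_simps)
    finally show ?thesis .
  qed
  moreover have "s \<bullet>c x = t \<bullet>c x + \<mu> * (x \<bullet>c x)"
  proof -
    have "s \<bullet>c x = (\<Sum>i<n. (t$i + \<mu> * x$i) * cnj (x$i))"
      unfolding cinner_sum[OF sc x(1)] by (intro sum.cong refl) (simp add: sti)
    also have "\<dots> = t \<bullet>c x + \<mu> * (x \<bullet>c x)"
      unfolding cinner_sum[OF tc x(1)] cinner_sum[OF x(1) x(1)]
      by (simp add: sum.distrib sum_distrib_left algebra_simps)
    finally show ?thesis .
  qed
  moreover have "x \<bullet>c t = t \<bullet>c x" unfolding t_def by (rule herm_inner[OF Tc x(1) x(1), symmetric])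
  moreover obtain qS where qS: "s \<bullet>c x = complex_of_real qS" "qS \<ge> 0"
    using psd_herm_quad[OF S x(1)] unfolding s_def by blast
  moreover obtain qT where qT: "t \<bullet>c x = complex_of_real qT" "qT \<ge> 0"
    using psd_herm_quad[OF T x(1)] unfolding t_def by blast
  moreover obtain r where r: "x \<bullet>c x = complex_of_real r" "r > 0"
  proof -
    have "0 < x \<bullet>c x" using conjugate_square_greater_0_vec[OF x(1)] x(2) by simp
    then have "Re (x \<bullet>c x) > 0" by (simp add: less_complex_def)
    then show thesis using that[of "Re (x \<bullet>c x)"] cinner_self_real[OF x(1)] by blast
  qed
  ultimately have e1: "0 = cnj \<mu> * qT + \<mu> * qT + \<mu> * cnj \<mu> * r" and e2: "qS = qT + \<mu> * r"
    by (auto simp: add.assoc)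
  define m where "m = (qS - qT) / r"
  have mu: "\<mu> = complex_of_real m" using e2 r(2) unfolding m_def by (simp add: field_simps)
  have "0 = 2 * m * qT + m * m * r" using e1 unfolding mu
    by (metis (no_types, lifting) Re_complex_of_real complex_cnj_complex_of_real mult_2 of_real_add of_real_mult of_real_0 distrib_right)
  then have "m * (qS + qT) = 0" unfolding m_def using r(2) by (simp add: field_simps)
  moreover have "m \<noteq> 0" using mu mu0 by simp
  ultimately have "qS = 0" "qT = 0" using qS qT by auto
  then have "S *\<^sub>v x = 0\<^sub>v n" "T *\<^sub>v x = 0\<^sub>v n"
    using psd_zero[OF S x(1)] psd_zero[OF T x(1)] qS qT unfolding s_def t_def by auto
  then have "\<mu> \<cdot>\<^sub>v x = 0\<^sub>v n" using \<open>s - t = \<mu> \<cdot>\<^sub>v x\<close> unfolding s_def t_def by simp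
  have "x = 0\<^sub>v n"
  proof (rule eq_vecI)
    fix i assume "i < dim_vec (0\<^sub>v n :: complex vec)"
    then have i: "i < n" by simp
    have "(\<mu> \<cdot>\<^sub>v x) $ i = 0" using \<open>\<mu> \<cdot>\<^sub>v x = 0\<^sub>v n\<close> i by simp
    then have "\<mu> * x $ i = 0" using i x by simp
    then show "x $ i = 0\<^sub>v n $ i" using mu0 i by simp
  qed (use x in auto)
  then show False using x by simp
qed

lemma pow_mat_add: assumes "A \<in> carrier_mat n n" shows "A ^\<^sub>m (a + b) = A ^\<^sub>m a * A ^\<^sub>m b"
proof (induction b)
  case 0 then show ?case using assms by simp
next
  case (Suc b)
  have "A ^\<^sub>m (a + Suc b) = (A ^\<^sub>m a * A ^\<^sub>m b) * A" using Suc by simp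
  also have "\<dots> = A ^\<^sub>m a * (A ^\<^sub>m b * A)" using assms by (simp add: assoc_mult_mat[of _ n n _ n _ n])
  finally show ?case by simp
qed

lemma madj_mult: assumes "A \<in> carrier_mat n m" "B \<in> carrier_mat m p"
  shows "madj (A * B) = madj B * madj A"
  by (rule eq_matI) (use assms in \<open>auto simp: scalar_prod_def cnj_sum mult.commute\<close>)

lemma madj_one[simp]: "madj (1\<^sub>m n) = 1\<^sub>m n"
  by (rule eq_matI) auto

lemma madj_minus: assumes "A \<in> carrier_mat n m" "B \<in> carrier_mat n m"
  shows "madj (A - B) = madj A - madj B"
  by (rule eq_matI) (use assms in auto)

lemma madj_pow: assumes A: "A \<in> carrier_mat n n" "madj A = A" shows "madj (A ^\<^sub>m k) = A ^\<^sub>m k"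
proof (induction k)
  case 0 then show ?case using A by simp
next
  case (Suc k)
  have c: "A * A ^\<^sub>m k = A ^\<^sub>m k * A"
  proof -
    have "A ^\<^sub>m (1+k) = A ^\<^sub>m 1 * A ^\<^sub>m k" by (rule pow_mat_add[OF A(1)])
    moreover have "A ^\<^sub>m 1 = A" using A by simp
    ultimately show ?thesis by simp
  qed
  have "madj (A ^\<^sub>m Suc k) = madj A * madj (A ^\<^sub>m k)"
    using A by (simp add: madj_mult[of _ n n _ n])
  also have "\<dots> = A ^\<^sub>m k * A" using Suc A c by simp
  finally show ?case by simp
qed

lemma herm_sq_zero: assumes M: "M \<in> carrier_mat n n" "madj M = M" and MM: "M * M = 0\<^sub>m n n"
  shows "M = 0\<^sub>m n n"
proof (rule eq_matI)
  fix i j assume ij: "i < dim_row (0\<^sub>m n n :: complex mat)" "j < dim_col (0\<^sub>m n n :: complex mat)"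
  then have i: "i < n" and j: "j < n" by auto
  have "(M * M) $$ (i,i) = (\<Sum>l<n. M $$ (i,l) * M $$ (l,i))"
    using M i by (simp add: scalar_prod_def atLeast0LessThan)
  also have "\<dots> = (\<Sum>l<n. complex_of_real ((cmod (M $$ (i,l)))^2))"
  proof (rule sum.cong[OF refl])
    fix l assume "l \<in> {..<n}"
    then have "M $$ (l,i) = cnj (M $$ (i,l))" by (intro herm_entry[OF M(2) M(1)]) (use i in auto)
    then show "M $$ (i,l) * M $$ (l,i) = complex_of_real ((cmod (M $$ (i,l)))^2)"
      using complex_norm_square[of "M $$ (i,l)"] by simp
  qed
  also have "\<dots> = complex_of_real (\<Sum>l<n. (cmod (M $$ (i,l)))^2)" by simp
  finally have eq: "(M * M) $$ (i,i) = complex_of_real (\<Sum>l<n. (cmod (M $$ (i,l)))^2)" .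
  have "(M * M) $$ (i,i) = 0" using MM i by simp
  then have "(\<Sum>l<n. (cmod (M $$ (i,l)))^2) = 0" unfolding eq by (simp only: of_real_eq_0_iff)
  then have "\<forall>l\<in>{..<n}. (cmod (M $$ (i,l)))^2 = 0" by (subst sum_nonneg_eq_0_iff[symmetric]) auto
  then show "M $$ (i,j) = 0\<^sub>m n n $$ (i,j)" using i j by simp
qed (use M in auto)

lemma herm_nilp_zero: assumes D: "D \<in> carrier_mat n n" "madj D = D" and Dk: "D ^\<^sub>m k = 0\<^sub>m n n"
  shows "D = 0\<^sub>m n n"
proof -
  have p2: "D ^\<^sub>m (2^m) = 0\<^sub>m n n \<Longrightarrow> D = 0\<^sub>m n n" for m
  proof (induction m)
    case 0 then show ?case using D by simp
  next
    case (Suc m)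
    let ?X = "D ^\<^sub>m (2^m)"
    have "?X * ?X = D ^\<^sub>m (2^Suc m)" using pow_mat_add[OF D(1), of "2^m" "2^m"] by (simp add: mult_2)
    then have "?X = 0\<^sub>m n n" using Suc.prems herm_sq_zero[of ?X n] D madj_pow[OF D] by simp
    then show ?case by (rule Suc.IH)
  qed
  have "k \<le> 2^k" using less_exp[of k] by simp
  then have "D ^\<^sub>m (2^k) = D ^\<^sub>m k * D ^\<^sub>m (2^k - k)" using pow_mat_add[OF D(1), of k "2^k - k"] by simp
  also have "\<dots> = 0\<^sub>m n n" using Dk D by simp
  finally show ?thesis by (rule p2)
qed

lemma strict_upper_pow: assumes B: "B \<in> carrier_mat n n" and su: "\<And>i j. i < n \<Longrightarrow> j < n \<Longrightarrow> j \<le> i \<Longrightarrow> B $$ (i,j) = 0"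
  shows "i < n \<Longrightarrow> j < n \<Longrightarrow> j < i + k \<Longrightarrow> (B ^\<^sub>m k) $$ (i,j) = 0"
proof (induction k arbitrary: i j)
  case 0 then show ?case using B by simp
next
  case (Suc k)
  have "(B ^\<^sub>m Suc k) $$ (i,j) = (\<Sum>l<n. (B ^\<^sub>m k) $$ (i,l) * B $$ (l,j))"
    using B Suc.prems by (simp add: scalar_prod_def atLeast0LessThan)
  also have "\<dots> = 0"
  proof (rule sum.neutral, rule ballI)
    fix l assume l: "l \<in> {..<n}"
    show "(B ^\<^sub>m k) $$ (i,l) * B $$ (l,j) = 0"
    proof (cases "l < i + k")
      case True then show ?thesis using Suc.IH[of i l] Suc.prems l by simp
    next
      case False then show ?thesis using su[of l j] Suc.prems l by simp
    qed
  qed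
  finally show ?case .
qed

lemma herm_eig0_zero: assumes D: "(D :: complex mat) \<in> carrier_mat n n" "madj D = D"
  and ev: "\<And>x \<mu>. eigenvector D x \<mu> \<Longrightarrow> \<mu> = 0"
  shows "D = 0\<^sub>m n n"
proof -
  obtain as where cp: "char_poly D = (\<Prod>a\<leftarrow>as. [:- a, 1:])" and las: "length as = n"
    using char_poly_factorized[OF D(1)] by blast
  obtain B P Q where sd: "schur_decomposition D as = (B,P,Q)" by (cases "schur_decomposition D as") auto
  from schur_decomposition[OF D(1) cp sd]
  have sim: "similar_mat_wit D B P Q" and ut: "upper_triangular B" and dg: "diag_mat B = as" by auto
  have carr: "B \<in> carrier_mat n n" "P \<in> carrier_mat n n" "Q \<in> carrier_mat n n"
    using sim D unfolding similar_mat_wit_def Let_def by auto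
  have as0: "a = 0" if "a \<in> set as" for a
  proof -
    have "poly (char_poly D) a = 0" unfolding cp poly_prod_list
      using that by (induction as) auto
    then have "eigenvalue D a" using eigenvalue_root_char_poly[OF D(1)] by simp
    then show ?thesis using ev unfolding eigenvalue_def by blast
  qed
  have su: "B $$ (i,j) = 0" if "i < n" "j < n" "j \<le> i" for i j
  proof (cases "j < i")
    case True then show ?thesis using ut carr that unfolding upper_triangular_def by auto
  next
    case False
    then have "j = i" using that by simp
    moreover have "B $$ (i,i) = as ! i" using dg carr that unfolding diag_mat_def by auto
    moreover have "as ! i \<in> set as" using las that by simp
    ultimately show ?thesis using as0 by simp
  qed
  have Bn: "B ^\<^sub>m n = 0\<^sub>m n n"
    by (rule eq_matI) (use strict_upper_pow[OF carr(1) su] carr in auto)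
  have "D ^\<^sub>m n = P * B ^\<^sub>m n * Q" by (rule similar_mat_wit_pow_id[OF sim])
  also have "\<dots> = 0\<^sub>m n n" unfolding Bn using carr by simp
  finally show ?thesis by (rule herm_nilp_zero[OF D])
qed

lemma psd_sqrt_unique: assumes S: "psd n S" and T: "psd n T" and ST: "S * S = T * T"
  shows "S = T"
proof -
  have Sc: "S \<in> carrier_mat n n" "madj S = S" and Tc: "T \<in> carrier_mat n n" "madj T = T"
    using S T unfolding psd_def by auto
  have "S - T = 0\<^sub>m n n"
  proof (rule herm_eig0_zero)
    show "S - T \<in> carrier_mat n n" using Tc by (simp add: minus_carrier_mat)
    show "madj (S - T) = S - T" using Sc Tc by (simp add: madj_minus[of _ n n])
    show "\<mu> = 0" if "eigenvector (S - T) x \<mu>" for x \<mu> by (rule sqrt_eig_zero[OF S T ST that])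
  qed
  show ?thesis
  proof (rule eq_matI)
    fix i j assume ij: "i < dim_row T" "j < dim_col T"
    then have "(S - T) $$ (i,j) = 0\<^sub>m n n $$ (i,j)" using \<open>S - T = 0\<^sub>m n n\<close> by simp
    then show "S $$ (i,j) = T $$ (i,j)" using ij Sc Tc by simp
  qed (use Sc Tc in auto)
qed

lemma msqrt_psd: assumes R: "psd n R" shows "msqrt n (R * madj R) = R"
proof -
  have "madj R = R" using R unfolding psd_def by auto
  then show ?thesis unfolding msqrt_def
    by (intro the_equality) (use R psd_sqrt_unique[OF _ R] in auto)
qed

lemma mult_index: "A \<in> carrier_mat n m \<Longrightarrow> B \<in> carrier_mat m p \<Longrightarrow> i < n \<Longrightarrow> j < p \<Longrightarrow>
   (A * B) $$ (i,j) = (\<Sum>l<m. A $$ (i,l) * B $$ (l,j))"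
  by (simp add: scalar_prod_def atLeast0LessThan)

lemma sum_delta_right: "j < (n::nat) \<Longrightarrow> (\<Sum>m<n. (f m :: complex) * (if m = j then 1 else 0)) = f j"
proof -
  assume j: "j < n"
  have "(\<Sum>m<n. f m * (if m = j then 1 else 0)) = (\<Sum>m<n. if m = j then f m else 0)" by (intro sum.cong) auto
  also have "\<dots> = f j" using sum.delta[of "{..<n}" j f] j by simp
  finally show ?thesis .
qed

lemma sum_delta_left: "i < (n::nat) \<Longrightarrow> (\<Sum>l<n. (if i = l then 1 else 0) * (f l :: complex)) = f i"
proof -
  assume i: "i < n"
  have "(\<Sum>l<n. (if i = l then 1 else 0) * f l) = (\<Sum>l<n. if i = l then f l else 0)" by (intro sum.cong) auto
  also have "\<dots> = f i" using sum.delta'[of "{..<n}" i f] i by simp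
  finally show ?thesis .
qed

lemma proj_carrier[simp]: "K \<in> carrier_mat n n \<Longrightarrow> proj n K s \<in> carrier_mat n n"
  unfolding proj_def carrier_mat_def by simp

lemma proj_index: "K \<in> carrier_mat n n \<Longrightarrow> i < n \<Longrightarrow> j < n \<Longrightarrow>
  proj n K s $$ (i,j) = complex_of_real (1/2) * ((if i = j then 1 else 0) + complex_of_real s * K $$ (i,j))"
  unfolding proj_def by simp

lemma meas_diff: assumes K: "K \<in> carrier_mat n n" and r: "\<rho> \<in> carrier_mat n n" and ij: "i < n" "j < n"
  shows "(proj n K 1 * \<rho> * proj n K 1) $$ (i,j) - (proj n K (-1) * \<rho> * proj n K (-1)) $$ (i,j)
    = (1/2) * ((K * \<rho>) $$ (i,j) + (\<rho> * K) $$ (i,j))"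
proof -
  define e :: "nat \<Rightarrow> nat \<Rightarrow> complex" where "e = (\<lambda>a b. if a = b then 1 else 0)"
  have X: "(proj n K s * \<rho> * proj n K s) $$ (i,j) =
     (\<Sum>m<n. (1/2) * (\<rho> $$ (i,m) + complex_of_real s * (K * \<rho>) $$ (i,m)) * ((1/2) * (e m j + complex_of_real s * K $$ (m,j))))" for s
  proof -
    have PC: "proj n K s \<in> carrier_mat n n" using K by simp
    have "(proj n K s * \<rho> * proj n K s) $$ (i,j) = (\<Sum>m<n. (proj n K s * \<rho>) $$ (i,m) * proj n K s $$ (m,j))"
      by (rule mult_index[OF mult_carrier_mat[OF PC r] PC]) (use ij in auto)
    also have "\<dots> = (\<Sum>m<n. (1/2) * (\<rho> $$ (i,m) + complex_of_real s * (K * \<rho>) $$ (i,m)) * ((1/2) * (e m j + complex_of_real s * K $$ (m,j))))"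
    proof (rule sum.cong[OF refl])
      fix m assume m: "m \<in> {..<n}"
      have "(proj n K s * \<rho>) $$ (i,m) = (\<Sum>l<n. proj n K s $$ (i,l) * \<rho> $$ (l,m))"
        using K r ij m by (intro mult_index[of _ n n]) (auto intro: mult_carrier_mat)
      also have "\<dots> = (\<Sum>l<n. (1/2) * (e i l * \<rho> $$ (l,m)) + (1/2) * complex_of_real s * (K $$ (i,l) * \<rho> $$ (l,m)))"
        using K ij by (intro sum.cong refl) (simp add: proj_index e_def algebra_simps)
      also have "\<dots> = (1/2) * (\<Sum>l<n. e i l * \<rho> $$ (l,m)) + (1/2) * complex_of_real s * (\<Sum>l<n. K $$ (i,l) * \<rho> $$ (l,m))"
        by (simp add: sum.distrib sum_distrib_left)
      also have "(\<Sum>l<n. e i l * \<rho> $$ (l,m)) = \<rho> $$ (i,m)" unfolding e_def by (rule sum_delta_left[OF ij(1)])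
      also have "(\<Sum>l<n. K $$ (i,l) * \<rho> $$ (l,m)) = (K * \<rho>) $$ (i,m)"
        using K r ij m by (intro mult_index[symmetric, of _ n n]) (auto intro: mult_carrier_mat)
      finally show "(proj n K s * \<rho>) $$ (i,m) * proj n K s $$ (m,j) = (1/2) * (\<rho> $$ (i,m) + complex_of_real s * (K * \<rho>) $$ (i,m)) * ((1/2) * (e m j + complex_of_real s * K $$ (m,j)))"
        using K m ij by (simp add: proj_index e_def algebra_simps)
    qed
    finally show ?thesis .
  qed
  have "(proj n K 1 * \<rho> * proj n K 1) $$ (i,j) - (proj n K (-1) * \<rho> * proj n K (-1)) $$ (i,j)
      = (\<Sum>m<n. (1/2) * (\<rho> $$ (i,m) * K $$ (m,j)) + (1/2) * ((K * \<rho>) $$ (i,m) * e m j))"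
    unfolding X sum_subtractf[symmetric] by (intro sum.cong refl) (simp add: algebra_simps)
  also have "\<dots> = (1/2) * (\<Sum>m<n. \<rho> $$ (i,m) * K $$ (m,j)) + (1/2) * (\<Sum>m<n. (K * \<rho>) $$ (i,m) * e m j)"
    by (simp add: sum.distrib sum_distrib_left)
  also have "(\<Sum>m<n. (K * \<rho>) $$ (i,m) * e m j) = (K * \<rho>) $$ (i,j)" unfolding e_def by (rule sum_delta_right[OF ij(2)])
  also have "(\<Sum>m<n. \<rho> $$ (i,m) * K $$ (m,j)) = (\<rho> * K) $$ (i,j)"
    using K r ij by (intro mult_index[symmetric, of _ n n]) (auto intro: mult_carrier_mat)
  finally show ?thesis by (simp add: algebra_simps)
qed

lemma idx_bound: "p < (dA::nat) \<Longrightarrow> k < dB \<Longrightarrow> p * dB + k < dA * dB"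
proof -
  assume "p < dA" "k < dB"
  then have "p * dB + k < p * dB + dB" by simp
  also have "\<dots> = Suc p * dB" by simp
  also have "\<dots> \<le> dA * dB" using \<open>p < dA\<close> by (intro mult_right_mono) auto
  finally show ?thesis .
qed

lemma idx_div[simp]: "k < (dB::nat) \<Longrightarrow> (p * dB + k) div dB = p"
  by simp
lemma idx_mod[simp]: "k < (dB::nat) \<Longrightarrow> (p * dB + k) mod dB = k"
  by simp

lemma ptrace_B_carrier[simp]: "ptrace_B dA dB M \<in> carrier_mat dA dA"
  unfolding ptrace_B_def by simp
lemma ptrace_A_carrier[simp]: "ptrace_A dA dB M \<in> carrier_mat dB dB"
  unfolding ptrace_A_def by simp
lemma ptrace_B_index: "i < dA \<Longrightarrow> j < dA \<Longrightarrow> ptrace_B dA dB M $$ (i,j) = (\<Sum>k<dB. M $$ (i*dB+k, j*dB+k))"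
  unfolding ptrace_B_def by simp
lemma ptrace_A_index: "i < dB \<Longrightarrow> j < dB \<Longrightarrow> ptrace_A dA dB M $$ (i,j) = (\<Sum>k<dA. M $$ (k*dB+i, k*dB+j))"
  unfolding ptrace_A_def by simp

lemma kron_one_left_index: assumes "\<sigma> \<in> carrier_mat dB dB" "i < dA * dB" "l < dA * dB"
  shows "kron (1\<^sub>m dA) \<sigma> $$ (i,l) = (if i div dB = l div dB then \<sigma> $$ (i mod dB, l mod dB) else 0)"
proof -
  have "dB > 0" using assms by (cases "dB = 0") auto
  then have "i div dB < dA" "l div dB < dA" using assms by (auto simp: less_mult_imp_div_less)
  then show ?thesis using assms by (simp add: kron_index)
qed

lemma kron_one_right_index: assumes "\<sigma> \<in> carrier_mat dA dA" "i < dA * dB" "l < dA * dB"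
  shows "kron \<sigma> (1\<^sub>m dB) $$ (i,l) = \<sigma> $$ (i div dB, l div dB) * (if i mod dB = l mod dB then 1 else 0)"
proof -
  have "dB > 0" using assms by (cases "dB = 0") auto
  then have "i mod dB < dB" "l mod dB < dB" by auto
  then show ?thesis using assms by (simp add: kron_index)
qed

lemma mtrace_mult: assumes "A \<in> carrier_mat n m" "B \<in> carrier_mat m n"
  shows "mtrace (A * B) = (\<Sum>i<n. \<Sum>l<m. A $$ (i,l) * B $$ (l,i))"
proof -
  have "dim_row (A * B) = n" using assms by simp
  then show ?thesis unfolding mtrace_def using mult_index[OF assms] by simp
qed

lemma sum_delta_mid: "b < (n::nat) \<Longrightarrow> (\<Sum>b'<n. x * (if b = b' then 1 else 0) * f b') = x * (f b :: complex)"
proof -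
  assume b: "b < n"
  have "(\<Sum>b'<n. x * (if b = b' then 1 else 0) * f b') = (\<Sum>b'<n. if b = b' then x * f b' else 0)" by (intro sum.cong) auto
  also have "\<dots> = x * f b" using sum.delta'[of "{..<n}" b "\<lambda>b'. x * f b'"] b by simp
  finally show ?thesis .
qed

lemma trace_kron_B: assumes s: "\<sigma> \<in> carrier_mat dA dA" and G: "G \<in> carrier_mat (dA*dB) (dA*dB)"
  shows "mtrace (kron \<sigma> (1\<^sub>m dB) * G) = mtrace (\<sigma> * ptrace_B dA dB G)"
proof -
  have K: "kron \<sigma> (1\<^sub>m dB) \<in> carrier_mat (dA*dB) (dA*dB)" using kron_carrier[OF s, of "1\<^sub>m dB" dB dB] by simp
  have "mtrace (kron \<sigma> (1\<^sub>m dB) * G) = (\<Sum>i<dA*dB. \<Sum>l<dA*dB. kron \<sigma> (1\<^sub>m dB) $$ (i,l) * G $$ (l,i))"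
    by (rule mtrace_mult[OF K G])
  also have "\<dots> = (\<Sum>a<dA. \<Sum>b<dB. \<Sum>a'<dA. \<Sum>b'<dB. \<sigma> $$ (a,a') * (if b = b' then 1 else 0) * G $$ (a'*dB+b', a*dB+b))"
    unfolding sum_split
    by (intro sum.cong refl) (simp add: kron_one_right_index[OF s] idx_bound)
  also have "\<dots> = (\<Sum>a<dA. \<Sum>b<dB. \<Sum>a'<dA. \<sigma> $$ (a,a') * G $$ (a'*dB+b, a*dB+b))"
    by (intro sum.cong refl) (simp add: sum_delta_mid)
  also have "\<dots> = (\<Sum>a<dA. \<Sum>a'<dA. \<sigma> $$ (a,a') * (\<Sum>b<dB. G $$ (a'*dB+b, a*dB+b)))"
  proof (rule sum.cong[OF refl])
    fix a assume "a \<in> {..<dA}"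
    show "(\<Sum>b<dB. \<Sum>a'<dA. \<sigma> $$ (a,a') * G $$ (a'*dB+b, a*dB+b)) = (\<Sum>a'<dA. \<sigma> $$ (a,a') * (\<Sum>b<dB. G $$ (a'*dB+b, a*dB+b)))"
      by (simp add: sum_distrib_left) (rule sum.swap)
  qed
  also have "\<dots> = (\<Sum>a<dA. \<Sum>a'<dA. \<sigma> $$ (a,a') * ptrace_B dA dB G $$ (a',a))"
    by (intro sum.cong refl) (simp add: ptrace_B_index)
  also have "\<dots> = mtrace (\<sigma> * ptrace_B dA dB G)"
    by (rule mtrace_mult[symmetric]) (use s in auto)
  finally show ?thesis .
qed

lemma trace_kron_A: assumes s: "\<sigma> \<in> carrier_mat dB dB" and G: "G \<in> carrier_mat (dA*dB) (dA*dB)"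
  shows "mtrace (kron (1\<^sub>m dA) \<sigma> * G) = mtrace (\<sigma> * ptrace_A dA dB G)"
proof -
  have K: "kron (1\<^sub>m dA) \<sigma> \<in> carrier_mat (dA*dB) (dA*dB)" using kron_carrier[OF _ s, of "1\<^sub>m dA" dA dA] by simp
  have "mtrace (kron (1\<^sub>m dA) \<sigma> * G) = (\<Sum>i<dA*dB. \<Sum>l<dA*dB. kron (1\<^sub>m dA) \<sigma> $$ (i,l) * G $$ (l,i))"
    by (rule mtrace_mult[OF K G])
  also have "\<dots> = (\<Sum>a<dA. \<Sum>b<dB. \<Sum>a'<dA. \<Sum>b'<dB. (if a = a' then 1 else 0) * \<sigma> $$ (b,b') * G $$ (a'*dB+b', a*dB+b))"
    unfolding sum_split
    by (intro sum.cong refl) (simp add: kron_one_left_index[OF s] idx_bound)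
  also have "\<dots> = (\<Sum>a<dA. \<Sum>b<dB. \<Sum>b'<dB. \<sigma> $$ (b,b') * G $$ (a*dB+b', a*dB+b))"
  proof (rule sum.cong[OF refl], rule sum.cong[OF refl])
    fix a b assume a: "a \<in> {..<dA}" and b: "b \<in> {..<dB}"
    have "(\<Sum>a'<dA. \<Sum>b'<dB. (if a = a' then 1 else 0) * \<sigma> $$ (b,b') * G $$ (a'*dB+b', a*dB+b))
       = (\<Sum>a'<dA. 1 * (if a = a' then 1 else 0) * (\<Sum>b'<dB. \<sigma> $$ (b,b') * G $$ (a'*dB+b', a*dB+b)))"
      by (intro sum.cong refl) (simp add: sum_distrib_left mult_ac)
    also have "\<dots> = (\<Sum>b'<dB. \<sigma> $$ (b,b') * G $$ (a*dB+b', a*dB+b))"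
      using a by (subst sum_delta_mid) auto
    finally show "(\<Sum>a'<dA. \<Sum>b'<dB. (if a = a' then 1 else 0) * \<sigma> $$ (b,b') * G $$ (a'*dB+b', a*dB+b))
       = (\<Sum>b'<dB. \<sigma> $$ (b,b') * G $$ (a*dB+b', a*dB+b))" .
  qed
  also have "\<dots> = (\<Sum>b<dB. \<Sum>b'<dB. \<sigma> $$ (b,b') * (\<Sum>a<dA. G $$ (a*dB+b', a*dB+b)))"
    by (simp add: sum_distrib_left sum.swap[of _ "{..<dA}"])
  also have "\<dots> = (\<Sum>b<dB. \<Sum>b'<dB. \<sigma> $$ (b,b') * ptrace_A dA dB G $$ (b',b))"
    by (intro sum.cong refl) (simp add: ptrace_A_index)
  also have "\<dots> = mtrace (\<sigma> * ptrace_A dA dB G)"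
    by (rule mtrace_mult[symmetric]) (use s in auto)
  finally show ?thesis .
qed

lemma sum_collapse: "p < (n::nat) \<Longrightarrow> (\<Sum>a<n. \<Sum>c<m. (if p = a then 1 else 0) * f a c) = (\<Sum>c<m. (f p c :: complex))"
proof -
  assume p: "p < n"
  have "(\<Sum>a<n. \<Sum>c<m. (if p = a then 1 else 0) * f a c) = (\<Sum>a<n. 1 * (if p = a then 1 else 0) * (\<Sum>c<m. f a c))"
    by (simp add: sum_distrib_left)
  also have "\<dots> = (\<Sum>c<m. f p c)" using p by (subst sum_delta_mid) auto
  finally show ?thesis .
qed

lemma ptB_Krho: assumes s: "\<sigma> \<in> carrier_mat dB dB" and r: "\<rho> \<in> carrier_mat (dA*dB) (dA*dB)" and pq: "p < dA" "q < dA"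
  shows "ptrace_B dA dB (kron (1\<^sub>m dA) \<sigma> * \<rho>) $$ (p,q) = (\<Sum>c<dB. \<Sum>c'<dB. \<sigma> $$ (c,c') * \<rho> $$ (p*dB+c', q*dB+c))"
proof -
  have K: "kron (1\<^sub>m dA) \<sigma> \<in> carrier_mat (dA*dB) (dA*dB)" using kron_carrier[OF _ s, of "1\<^sub>m dA" dA dA] by simp
  have "ptrace_B dA dB (kron (1\<^sub>m dA) \<sigma> * \<rho>) $$ (p,q) = (\<Sum>c<dB. (kron (1\<^sub>m dA) \<sigma> * \<rho>) $$ (p*dB+c, q*dB+c))"
    using pq by (simp add: ptrace_B_index)
  also have "\<dots> = (\<Sum>c<dB. \<Sum>a<dA. \<Sum>c'<dB. (if p = a then 1 else 0) * (\<sigma> $$ (c,c') * \<rho> $$ (a*dB+c', q*dB+c)))"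
  proof (rule sum.cong[OF refl])
    fix c assume c: "c \<in> {..<dB}"
    have "(kron (1\<^sub>m dA) \<sigma> * \<rho>) $$ (p*dB+c, q*dB+c) = (\<Sum>l<dA*dB. kron (1\<^sub>m dA) \<sigma> $$ (p*dB+c, l) * \<rho> $$ (l, q*dB+c))"
      using c pq by (intro mult_index[OF K r]) (auto simp: idx_bound)
    also have "\<dots> = (\<Sum>a<dA. \<Sum>c'<dB. (if p = a then 1 else 0) * (\<sigma> $$ (c,c') * \<rho> $$ (a*dB+c', q*dB+c)))"
      unfolding sum_split using c pq by (intro sum.cong refl) (simp add: kron_one_left_index[OF s] idx_bound)
    finally show "(kron (1\<^sub>m dA) \<sigma> * \<rho>) $$ (p*dB+c, q*dB+c) = (\<Sum>a<dA. \<Sum>c'<dB. (if p = a then 1 else 0) * (\<sigma> $$ (c,c') * \<rho> $$ (a*dB+c', q*dB+c)))" .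
  qed
  also have "\<dots> = (\<Sum>c<dB. \<Sum>c'<dB. \<sigma> $$ (c,c') * \<rho> $$ (p*dB+c', q*dB+c))"
    by (rule sum.cong[OF refl], rule sum_collapse[OF pq(1)])
  finally show ?thesis .
qed

lemma ptB_rhoK: assumes s: "\<sigma> \<in> carrier_mat dB dB" and r: "\<rho> \<in> carrier_mat (dA*dB) (dA*dB)" and pq: "p < dA" "q < dA"
  shows "ptrace_B dA dB (\<rho> * kron (1\<^sub>m dA) \<sigma>) $$ (p,q) = (\<Sum>c<dB. \<Sum>c'<dB. \<rho> $$ (p*dB+c, q*dB+c') * \<sigma> $$ (c',c))"
proof -
  have K: "kron (1\<^sub>m dA) \<sigma> \<in> carrier_mat (dA*dB) (dA*dB)" using kron_carrier[OF _ s, of "1\<^sub>m dA" dA dA] by simp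
  have "ptrace_B dA dB (\<rho> * kron (1\<^sub>m dA) \<sigma>) $$ (p,q) = (\<Sum>c<dB. (\<rho> * kron (1\<^sub>m dA) \<sigma>) $$ (p*dB+c, q*dB+c))"
    using pq by (simp add: ptrace_B_index)
  also have "\<dots> = (\<Sum>c<dB. \<Sum>a<dA. \<Sum>c'<dB. (if q = a then 1 else 0) * (\<rho> $$ (p*dB+c, a*dB+c') * \<sigma> $$ (c',c)))"
  proof (rule sum.cong[OF refl])
    fix c assume c: "c \<in> {..<dB}"
    have "(\<rho> * kron (1\<^sub>m dA) \<sigma>) $$ (p*dB+c, q*dB+c) = (\<Sum>l<dA*dB. \<rho> $$ (p*dB+c, l) * kron (1\<^sub>m dA) \<sigma> $$ (l, q*dB+c))"
      using c pq by (intro mult_index[OF r K]) (auto simp: idx_bound)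
    also have "\<dots> = (\<Sum>a<dA. \<Sum>c'<dB. (if q = a then 1 else 0) * (\<rho> $$ (p*dB+c, a*dB+c') * \<sigma> $$ (c',c)))"
      unfolding sum_split using c pq by (intro sum.cong refl) (auto simp: kron_one_left_index[OF s] idx_bound)
    finally show "(\<rho> * kron (1\<^sub>m dA) \<sigma>) $$ (p*dB+c, q*dB+c) = (\<Sum>a<dA. \<Sum>c'<dB. (if q = a then 1 else 0) * (\<rho> $$ (p*dB+c, a*dB+c') * \<sigma> $$ (c',c)))" .
  qed
  also have "\<dots> = (\<Sum>c<dB. \<Sum>c'<dB. \<rho> $$ (p*dB+c, q*dB+c') * \<sigma> $$ (c',c))"
    by (rule sum.cong[OF refl], rule sum_collapse[OF pq(2)])
  finally show ?thesis .
qed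

lemma ptA_Krho: assumes s: "\<sigma> \<in> carrier_mat dA dA" and r: "\<rho> \<in> carrier_mat (dA*dB) (dA*dB)" and pq: "p < dB" "q < dB"
  shows "ptrace_A dA dB (kron \<sigma> (1\<^sub>m dB) * \<rho>) $$ (p,q) = (\<Sum>c<dA. \<Sum>c'<dA. \<sigma> $$ (c,c') * \<rho> $$ (c'*dB+p, c*dB+q))"
proof -
  have K: "kron \<sigma> (1\<^sub>m dB) \<in> carrier_mat (dA*dB) (dA*dB)" using kron_carrier[OF s, of "1\<^sub>m dB" dB dB] by simp
  have "ptrace_A dA dB (kron \<sigma> (1\<^sub>m dB) * \<rho>) $$ (p,q) = (\<Sum>c<dA. (kron \<sigma> (1\<^sub>m dB) * \<rho>) $$ (c*dB+p, c*dB+q))"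
    using pq by (simp add: ptrace_A_index)
  also have "\<dots> = (\<Sum>c<dA. \<Sum>c'<dA. \<sigma> $$ (c,c') * \<rho> $$ (c'*dB+p, c*dB+q))"
  proof (rule sum.cong[OF refl])
    fix c assume c: "c \<in> {..<dA}"
    have "(kron \<sigma> (1\<^sub>m dB) * \<rho>) $$ (c*dB+p, c*dB+q) = (\<Sum>l<dA*dB. kron \<sigma> (1\<^sub>m dB) $$ (c*dB+p, l) * \<rho> $$ (l, c*dB+q))"
      using c pq by (intro mult_index[OF K r]) (auto simp: idx_bound)
    also have "\<dots> = (\<Sum>c'<dA. \<Sum>b<dB. \<sigma> $$ (c,c') * (if p = b then 1 else 0) * \<rho> $$ (c'*dB+b, c*dB+q))"
      unfolding sum_split using c pq by (intro sum.cong refl) (auto simp: kron_one_right_index[OF s] idx_bound)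
    also have "\<dots> = (\<Sum>c'<dA. \<sigma> $$ (c,c') * \<rho> $$ (c'*dB+p, c*dB+q))"
      using pq by (intro sum.cong refl) (rule sum_delta_mid)
    finally show "(kron \<sigma> (1\<^sub>m dB) * \<rho>) $$ (c*dB+p, c*dB+q) = (\<Sum>c'<dA. \<sigma> $$ (c,c') * \<rho> $$ (c'*dB+p, c*dB+q))" .
  qed
  finally show ?thesis .
qed

lemma ptA_rhoK: assumes s: "\<sigma> \<in> carrier_mat dA dA" and r: "\<rho> \<in> carrier_mat (dA*dB) (dA*dB)" and pq: "p < dB" "q < dB"
  shows "ptrace_A dA dB (\<rho> * kron \<sigma> (1\<^sub>m dB)) $$ (p,q) = (\<Sum>c<dA. \<Sum>c'<dA. \<rho> $$ (c*dB+p, c'*dB+q) * \<sigma> $$ (c',c))"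
proof -
  have K: "kron \<sigma> (1\<^sub>m dB) \<in> carrier_mat (dA*dB) (dA*dB)" using kron_carrier[OF s, of "1\<^sub>m dB" dB dB] by simp
  have "ptrace_A dA dB (\<rho> * kron \<sigma> (1\<^sub>m dB)) $$ (p,q) = (\<Sum>c<dA. (\<rho> * kron \<sigma> (1\<^sub>m dB)) $$ (c*dB+p, c*dB+q))"
    using pq by (simp add: ptrace_A_index)
  also have "\<dots> = (\<Sum>c<dA. \<Sum>c'<dA. \<rho> $$ (c*dB+p, c'*dB+q) * \<sigma> $$ (c',c))"
  proof (rule sum.cong[OF refl])
    fix c assume c: "c \<in> {..<dA}"
    have "(\<rho> * kron \<sigma> (1\<^sub>m dB)) $$ (c*dB+p, c*dB+q) = (\<Sum>l<dA*dB. \<rho> $$ (c*dB+p, l) * kron \<sigma> (1\<^sub>m dB) $$ (l, c*dB+q))"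
      using c pq by (intro mult_index[OF r K]) (auto simp: idx_bound)
    also have "\<dots> = (\<Sum>c'<dA. \<Sum>b<dB. (\<rho> $$ (c*dB+p, c'*dB+q) * \<sigma> $$ (c',c)) * (if q = b then 1 else 0) * 1)"
      unfolding sum_split using c pq by (intro sum.cong refl) (auto simp: kron_one_right_index[OF s] idx_bound)
    also have "\<dots> = (\<Sum>c'<dA. \<rho> $$ (c*dB+p, c'*dB+q) * \<sigma> $$ (c',c))"
      using pq by (intro sum.cong refl) (simp add: sum_delta_mid[where f="\<lambda>_. 1", simplified])
    finally show "(\<rho> * kron \<sigma> (1\<^sub>m dB)) $$ (c*dB+p, c*dB+q) = (\<Sum>c'<dA. \<rho> $$ (c*dB+p, c'*dB+q) * \<sigma> $$ (c',c))" .
  qed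
  finally show ?thesis .
qed

lemma quad_sum: assumes "M \<in> carrier_mat n n" "v \<in> carrier_vec n"
  shows "(M *\<^sub>v v) \<bullet>c v = (\<Sum>i<n. (\<Sum>j<n. M $$ (i,j) * v $ j) * cnj (v $ i))"
proof -
  have Mv: "M *\<^sub>v v \<in> carrier_vec n" using assms by simp
  show ?thesis unfolding cinner_sum[OF Mv assms(2)] using assms by (intro sum.cong refl) (simp add: mulv_index del: index_mult_mat_vec)
qed

lemma madj_add: "A \<in> carrier_mat n m \<Longrightarrow> B \<in> carrier_mat n m \<Longrightarrow> madj (A + B) = madj A + madj B"
  by (rule eq_matI) auto

lemma madj_smult: "madj (c \<cdot>\<^sub>m A) = cnj c \<cdot>\<^sub>m madj A"
  by (rule eq_matI) auto

lemma psd_add: assumes A: "psd n A" and B: "psd n B" shows "psd n (A + B)"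
proof -
  have Ac: "A \<in> carrier_mat n n" "madj A = A" and Bc: "B \<in> carrier_mat n n" "madj B = B"
    using A B unfolding psd_def by auto
  have "0 \<le> Re (((A + B) *\<^sub>v v) \<bullet>c v)" if v: "v \<in> carrier_vec n" for v
  proof -
    have AB: "A + B \<in> carrier_mat n n" using Ac Bc by simp
    have dB: "dim_row B = n" "dim_col B = n" using Bc by auto
    have "((A + B) *\<^sub>v v) \<bullet>c v = (\<Sum>i<n. (\<Sum>j<n. A $$ (i,j) * v $ j) * cnj (v $ i) + (\<Sum>j<n. B $$ (i,j) * v $ j) * cnj (v $ i))"
      unfolding quad_sum[OF AB v] using dB by (intro sum.cong refl) (simp add: sum.distrib distrib_right)
    also have "\<dots> = (A *\<^sub>v v) \<bullet>c v + (B *\<^sub>v v) \<bullet>c v"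
      unfolding quad_sum[OF Ac(1) v] quad_sum[OF Bc(1) v] by (rule sum.distrib)
    finally have "((A + B) *\<^sub>v v) \<bullet>c v = (A *\<^sub>v v) \<bullet>c v + (B *\<^sub>v v) \<bullet>c v" .
    then show ?thesis using A B v unfolding psd_def by simp
  qed
  then show ?thesis unfolding psd_def using Ac Bc by (simp add: madj_add[of _ n n])
qed

lemma psd_smult: assumes A: "psd n A" and c: "c \<ge> 0" shows "psd n (complex_of_real c \<cdot>\<^sub>m A)"
proof -
  have Ac: "A \<in> carrier_mat n n" "madj A = A" using A unfolding psd_def by auto
  have "0 \<le> Re (((complex_of_real c \<cdot>\<^sub>m A) *\<^sub>v v) \<bullet>c v)" if v: "v \<in> carrier_vec n" for v
  proof -
    have cA: "complex_of_real c \<cdot>\<^sub>m A \<in> carrier_mat n n" using Ac by simp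
    have dA: "dim_row A = n" "dim_col A = n" using Ac by auto
    have "((complex_of_real c \<cdot>\<^sub>m A) *\<^sub>v v) \<bullet>c v = (\<Sum>i<n. complex_of_real c * ((\<Sum>j<n. A $$ (i,j) * v $ j) * cnj (v $ i)))"
      unfolding quad_sum[OF cA v] using dA by (intro sum.cong refl) (simp add: sum_distrib_left mult_ac)
    also have "\<dots> = complex_of_real c * ((A *\<^sub>v v) \<bullet>c v)"
      unfolding quad_sum[OF Ac(1) v] by (rule sum_distrib_left[symmetric])
    finally have "((complex_of_real c \<cdot>\<^sub>m A) *\<^sub>v v) \<bullet>c v = complex_of_real c * ((A *\<^sub>v v) \<bullet>c v)" .
    then show ?thesis using A v c unfolding psd_def by simp
  qed
  then show ?thesis unfolding psd_def using Ac by (simp add: madj_smult)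
qed

lemma psd_conj: assumes r: "psd n \<rho>" and K: "K \<in> carrier_mat n n" "madj K = K"
  shows "psd n (K * \<rho> * K)"
proof -
  have rc: "\<rho> \<in> carrier_mat n n" "madj \<rho> = \<rho>" using r unfolding psd_def by auto
  have "0 \<le> Re (((K * \<rho> * K) *\<^sub>v v) \<bullet>c v)" if v: "v \<in> carrier_vec n" for v
  proof -
    have "(K * \<rho> * K) *\<^sub>v v = K *\<^sub>v (\<rho> *\<^sub>v (K *\<^sub>v v))" using K rc v by (simp add: assoc_mult_mat_vec[of _ n n _ n])
    then have "((K * \<rho> * K) *\<^sub>v v) \<bullet>c v = (\<rho> *\<^sub>v (K *\<^sub>v v)) \<bullet>c (K *\<^sub>v v)"
      using herm_inner[OF K v, of "\<rho> *\<^sub>v (K *\<^sub>v v)"] K rc v by simp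
    then show ?thesis using r K v unfolding psd_def by simp
  qed
  moreover have "madj (K * \<rho> * K) = K * \<rho> * K"
    using K rc by (simp add: madj_mult[of _ n n _ n] assoc_mult_mat[of _ n n _ n _ n])
  moreover have "K * \<rho> * K \<in> carrier_mat n n" using K rc by simp
  ultimately show ?thesis unfolding psd_def by simp
qed

lemma psd_diag: assumes X: "psd n X" and i: "i < n"
  shows "X $$ (i,i) = complex_of_real (Re (X $$ (i,i))) \<and> Re (X $$ (i,i)) \<ge> 0"
proof -
  have Xc: "X \<in> carrier_mat n n" "madj X = X" using X unfolding psd_def by auto
  define e :: "complex vec" where "e = unit_vec n i"
  have e: "e \<in> carrier_vec n" by (simp add: e_def)
  have "(X *\<^sub>v e) \<bullet>c e = (\<Sum>a<n. (\<Sum>b<n. X $$ (a,b) * e $ b) * cnj (e $ a))"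
    by (rule quad_sum[OF Xc(1) e])
  also have "\<dots> = (\<Sum>a<n. (if a = i then X $$ (a,i) else 0))"
  proof (rule sum.cong[OF refl])
    fix a assume a: "a \<in> {..<n}"
    have "(\<Sum>b<n. X $$ (a,b) * e $ b) = X $$ (a,i)"
      using sum_delta_right[OF i, of "\<lambda>b. X $$ (a,b)"] i unfolding e_def by (simp add: unit_vec_def)
    then show "(\<Sum>b<n. X $$ (a,b) * e $ b) * cnj (e $ a) = (if a = i then X $$ (a,i) else 0)"
      using a i unfolding e_def by (simp add: unit_vec_def)
  qed
  also have "\<dots> = X $$ (i,i)" using i by simp
  finally have q: "(X *\<^sub>v e) \<bullet>c e = X $$ (i,i)" .
  have "Re (X $$ (i,i)) \<ge> 0" using X e unfolding psd_def q[symmetric] by blast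
  moreover have hc: "X $$ (i,i) = cnj (X $$ (i,i))" by (rule herm_entry[OF Xc(2) Xc(1) i i])
  have "Im (X $$ (i,i)) = 0" using arg_cong[where f=Im, OF hc] by simp
  ultimately show ?thesis by (simp add: complex_eq_iff)
qed

lemma psd_trace: assumes X: "psd n X"
  shows "mtrace X = complex_of_real (Re (mtrace X)) \<and> Re (mtrace X) \<ge> 0"
proof -
  have Xc: "X \<in> carrier_mat n n" using X unfolding psd_def by auto
  have t: "mtrace X = (\<Sum>i<n. X $$ (i,i))" using Xc unfolding mtrace_def by simp
  have "mtrace X = (\<Sum>i<n. complex_of_real (Re (X $$ (i,i))))"
    unfolding t using psd_diag[OF X] by (intro sum.cong refl) auto
  moreover have "(\<Sum>i<n. Re (X $$ (i,i))) \<ge> 0" using psd_diag[OF X] by (intro sum_nonneg) auto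
  ultimately show ?thesis by simp
qed

lemma mtrace_add: "A \<in> carrier_mat n n \<Longrightarrow> B \<in> carrier_mat n n \<Longrightarrow> mtrace (A + B) = mtrace A + mtrace B"
  unfolding mtrace_def by (simp add: sum.distrib)

lemma mtrace_smult: "A \<in> carrier_mat n n \<Longrightarrow> mtrace (c \<cdot>\<^sub>m A) = c * mtrace A"
  unfolding mtrace_def by (simp add: sum_distrib_left)

lemma ptrace_dims[simp]: "dim_row (ptrace_B dA dB M) = dA" "dim_col (ptrace_B dA dB M) = dA"
  "dim_row (ptrace_A dA dB M) = dB" "dim_col (ptrace_A dA dB M) = dB"
  unfolding ptrace_B_def ptrace_A_def by simp_all

lemma ptrace_B_add: assumes "A \<in> carrier_mat (dA*dB) (dA*dB)" "B \<in> carrier_mat (dA*dB) (dA*dB)"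
  shows "ptrace_B dA dB (A + B) = ptrace_B dA dB A + ptrace_B dA dB B"
  by (rule eq_matI) (use assms in \<open>auto simp: ptrace_B_index idx_bound sum.distrib\<close>)

lemma ptrace_B_smult: assumes "A \<in> carrier_mat (dA*dB) (dA*dB)"
  shows "ptrace_B dA dB (c \<cdot>\<^sub>m A) = c \<cdot>\<^sub>m ptrace_B dA dB A"
  by (rule eq_matI) (use assms in \<open>auto simp: ptrace_B_index idx_bound sum_distrib_left\<close>)

lemma ptrace_A_add: assumes "A \<in> carrier_mat (dA*dB) (dA*dB)" "B \<in> carrier_mat (dA*dB) (dA*dB)"
  shows "ptrace_A dA dB (A + B) = ptrace_A dA dB A + ptrace_A dA dB B"
  by (rule eq_matI) (use assms in \<open>auto simp: ptrace_A_index idx_bound sum.distrib\<close>)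

lemma ptrace_A_smult: assumes "A \<in> carrier_mat (dA*dB) (dA*dB)"
  shows "ptrace_A dA dB (c \<cdot>\<^sub>m A) = c \<cdot>\<^sub>m ptrace_A dA dB A"
  by (rule eq_matI) (use assms in \<open>auto simp: ptrace_A_index idx_bound sum_distrib_left\<close>)

lemma linear_opD: assumes "linear_op din dout \<Phi>"
  shows "\<And>X. X \<in> carrier_mat din din \<Longrightarrow> \<Phi> X \<in> carrier_mat dout dout"
    "\<And>X Y. X \<in> carrier_mat din din \<Longrightarrow> Y \<in> carrier_mat din din \<Longrightarrow> \<Phi> (X + Y) = \<Phi> X + \<Phi> Y"
    "\<And>c X. X \<in> carrier_mat din din \<Longrightarrow> \<Phi> (c \<cdot>\<^sub>m X) = c \<cdot>\<^sub>m \<Phi> X"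
  using assms unfolding linear_op_def by auto

lemma density_of_psd: assumes X: "psd n X" and r0: "density n \<rho>0"
  obtains c where "c > 0" "density n (complex_of_real (1/c) \<cdot>\<^sub>m (X + \<rho>0))"
proof -
  have r0p: "psd n \<rho>0" and tr0: "mtrace \<rho>0 = 1" using r0 unfolding density_def by auto
  have Y: "psd n (X + \<rho>0)" by (rule psd_add[OF X r0p])
  have Xc: "X \<in> carrier_mat n n" and rc: "\<rho>0 \<in> carrier_mat n n" using X r0p unfolding psd_def by auto
  define c where "c = Re (mtrace (X + \<rho>0))"
  have tY: "mtrace (X + \<rho>0) = complex_of_real c" using psd_trace[OF Y] unfolding c_def by simp
  have "mtrace (X + \<rho>0) = mtrace X + 1" using mtrace_add[OF Xc rc] tr0 by simp
  then have "c = Re (mtrace X) + 1" unfolding c_def by simp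
  then have cpos: "c > 0" using psd_trace[OF X] by simp
  have "psd n (complex_of_real (1/c) \<cdot>\<^sub>m (X + \<rho>0))" using psd_smult[OF Y, of "1/c"] cpos by simp
  moreover have "mtrace (complex_of_real (1/c) \<cdot>\<^sub>m (X + \<rho>0)) = 1"
    using mtrace_smult[of "X + \<rho>0" n] Xc rc tY cpos by simp
  ultimately show ?thesis using that cpos unfolding density_def by blast
qed

lemma ns_B: assumes Pl: "linear_op (dA*dB) (dA*dB) P" and Tl: "linear_op dA dA T"
  and ns: "\<forall>\<rho>. density (dA*dB) \<rho> \<longrightarrow> ptrace_B dA dB (P \<rho>) = T (ptrace_B dA dB \<rho>)"
  and r0: "density (dA*dB) \<rho>0" and X: "psd (dA*dB) X"
  shows "ptrace_B dA dB (P X) = T (ptrace_B dA dB X)"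
proof -
  obtain c where c: "c > 0" and Z: "density (dA*dB) (complex_of_real (1/c) \<cdot>\<^sub>m (X + \<rho>0))"
    using density_of_psd[OF X r0] by blast
  have Xc: "X \<in> carrier_mat (dA*dB) (dA*dB)" and rc: "\<rho>0 \<in> carrier_mat (dA*dB) (dA*dB)"
    using X r0 unfolding psd_def density_def by auto
  let ?k = "complex_of_real (1/c)"
  have PX: "P X \<in> carrier_mat (dA*dB) (dA*dB)" and Pr: "P \<rho>0 \<in> carrier_mat (dA*dB) (dA*dB)"
    using linear_opD(1)[OF Pl] Xc rc by auto
  have TX: "T (ptrace_B dA dB X) \<in> carrier_mat dA dA" and Tr: "T (ptrace_B dA dB \<rho>0) \<in> carrier_mat dA dA"
    using linear_opD(1)[OF Tl] by auto
  have "ptrace_B dA dB (P (?k \<cdot>\<^sub>m (X + \<rho>0))) = ?k \<cdot>\<^sub>m (ptrace_B dA dB (P X) + ptrace_B dA dB (P \<rho>0))"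
    using Xc rc PX Pr by (simp add: linear_opD[OF Pl] ptrace_B_smult ptrace_B_add)
  moreover have "T (ptrace_B dA dB (?k \<cdot>\<^sub>m (X + \<rho>0))) = ?k \<cdot>\<^sub>m (T (ptrace_B dA dB X) + T (ptrace_B dA dB \<rho>0))"
    using Xc rc by (simp add: linear_opD[OF Tl] ptrace_B_smult ptrace_B_add)
  moreover have "ptrace_B dA dB (P (?k \<cdot>\<^sub>m (X + \<rho>0))) = T (ptrace_B dA dB (?k \<cdot>\<^sub>m (X + \<rho>0)))"
    using ns Z by blast
  moreover have e0: "ptrace_B dA dB (P \<rho>0) = T (ptrace_B dA dB \<rho>0)" using ns r0 by blast
  ultimately have E: "?k \<cdot>\<^sub>m (ptrace_B dA dB (P X) + T (ptrace_B dA dB \<rho>0)) = ?k \<cdot>\<^sub>m (T (ptrace_B dA dB X) + T (ptrace_B dA dB \<rho>0))"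
    by simp
  show ?thesis
  proof (rule eq_matI)
    fix i j assume ij: "i < dim_row (T (ptrace_B dA dB X))" "j < dim_col (T (ptrace_B dA dB X))"
    then have ij': "i < dA" "j < dA" using TX by auto
    have "(?k \<cdot>\<^sub>m (ptrace_B dA dB (P X) + T (ptrace_B dA dB \<rho>0))) $$ (i,j) = (?k \<cdot>\<^sub>m (T (ptrace_B dA dB X) + T (ptrace_B dA dB \<rho>0))) $$ (i,j)"
      using E by simp
    then have "?k * (ptrace_B dA dB (P X) $$ (i,j) + T (ptrace_B dA dB \<rho>0) $$ (i,j)) = ?k * (T (ptrace_B dA dB X) $$ (i,j) + T (ptrace_B dA dB \<rho>0) $$ (i,j))"
      using ij' TX Tr by simp
    then show "ptrace_B dA dB (P X) $$ (i,j) = T (ptrace_B dA dB X) $$ (i,j)" using c by simp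
  qed (use TX in auto)
qed

lemma ns_A: assumes Pl: "linear_op (dA*dB) (dA*dB) P" and Sl: "linear_op dB dB S"
  and ns: "\<forall>\<rho>. density (dA*dB) \<rho> \<longrightarrow> ptrace_A dA dB (P \<rho>) = S (ptrace_A dA dB \<rho>)"
  and r0: "density (dA*dB) \<rho>0" and X: "psd (dA*dB) X"
  shows "ptrace_A dA dB (P X) = S (ptrace_A dA dB X)"
proof -
  obtain c where c: "c > 0" and Z: "density (dA*dB) (complex_of_real (1/c) \<cdot>\<^sub>m (X + \<rho>0))"
    using density_of_psd[OF X r0] by blast
  have Xc: "X \<in> carrier_mat (dA*dB) (dA*dB)" and rc: "\<rho>0 \<in> carrier_mat (dA*dB) (dA*dB)"
    using X r0 unfolding psd_def density_def by auto
  let ?k = "complex_of_real (1/c)"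
  have PX: "P X \<in> carrier_mat (dA*dB) (dA*dB)" and Pr: "P \<rho>0 \<in> carrier_mat (dA*dB) (dA*dB)"
    using linear_opD(1)[OF Pl] Xc rc by auto
  have TX: "S (ptrace_A dA dB X) \<in> carrier_mat dB dB" and Tr: "S (ptrace_A dA dB \<rho>0) \<in> carrier_mat dB dB"
    using linear_opD(1)[OF Sl] by auto
  have "ptrace_A dA dB (P (?k \<cdot>\<^sub>m (X + \<rho>0))) = ?k \<cdot>\<^sub>m (ptrace_A dA dB (P X) + ptrace_A dA dB (P \<rho>0))"
    using Xc rc PX Pr by (simp add: linear_opD[OF Pl] ptrace_A_smult ptrace_A_add)
  moreover have "S (ptrace_A dA dB (?k \<cdot>\<^sub>m (X + \<rho>0))) = ?k \<cdot>\<^sub>m (S (ptrace_A dA dB X) + S (ptrace_A dA dB \<rho>0))"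
    using Xc rc by (simp add: linear_opD[OF Sl] ptrace_A_smult ptrace_A_add)
  moreover have "ptrace_A dA dB (P (?k \<cdot>\<^sub>m (X + \<rho>0))) = S (ptrace_A dA dB (?k \<cdot>\<^sub>m (X + \<rho>0)))"
    using ns Z by blast
  moreover have e0: "ptrace_A dA dB (P \<rho>0) = S (ptrace_A dA dB \<rho>0)" using ns r0 by blast
  ultimately have E: "?k \<cdot>\<^sub>m (ptrace_A dA dB (P X) + S (ptrace_A dA dB \<rho>0)) = ?k \<cdot>\<^sub>m (S (ptrace_A dA dB X) + S (ptrace_A dA dB \<rho>0))"
    by simp
  show ?thesis
  proof (rule eq_matI)
    fix i j assume ij: "i < dim_row (S (ptrace_A dA dB X))" "j < dim_col (S (ptrace_A dA dB X))"
    then have ij': "i < dB" "j < dB" using TX by auto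
    have "(?k \<cdot>\<^sub>m (ptrace_A dA dB (P X) + S (ptrace_A dA dB \<rho>0))) $$ (i,j) = (?k \<cdot>\<^sub>m (S (ptrace_A dA dB X) + S (ptrace_A dA dB \<rho>0))) $$ (i,j)"
      using E by simp
    then have "?k * (ptrace_A dA dB (P X) $$ (i,j) + S (ptrace_A dA dB \<rho>0) $$ (i,j)) = ?k * (S (ptrace_A dA dB X) $$ (i,j) + S (ptrace_A dA dB \<rho>0) $$ (i,j))"
      using ij' TX Tr by simp
    then show "ptrace_A dA dB (P X) $$ (i,j) = S (ptrace_A dA dB X) $$ (i,j)" using c by simp
  qed (use TX in auto)
qed

lemma proj_trace: assumes K: "K \<in> carrier_mat n n" and G: "G \<in> carrier_mat n n"
  shows "mtrace (proj n K t * G) = complex_of_real (1/2) * (mtrace G + complex_of_real t * mtrace (K * G))"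
proof -
  have "mtrace (proj n K t * G) = (\<Sum>i<n. \<Sum>l<n. proj n K t $$ (i,l) * G $$ (l,i))"
    by (rule mtrace_mult[OF proj_carrier[OF K] G])
  also have "\<dots> = (\<Sum>i<n. complex_of_real (1/2) * (\<Sum>l<n. (if i = l then 1 else 0) * G $$ (l,i)) +
       complex_of_real (1/2) * complex_of_real t * (\<Sum>l<n. K $$ (i,l) * G $$ (l,i)))"
    using K by (intro sum.cong refl) (simp add: proj_index sum.distrib sum_distrib_left algebra_simps)
  also have "\<dots> = (\<Sum>i<n. complex_of_real (1/2) * G $$ (i,i) +
       complex_of_real (1/2) * complex_of_real t * (\<Sum>l<n. K $$ (i,l) * G $$ (l,i)))"
    by (intro sum.cong refl) (simp add: sum_delta_left)
  also have "\<dots> = complex_of_real (1/2) * (mtrace G + complex_of_real t * mtrace (K * G))"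
  proof -
    have tG: "mtrace G = (\<Sum>i<n. G $$ (i,i))" using G by (simp add: mtrace_def)
    show ?thesis unfolding tG mtrace_mult[OF K G] by (simp add: sum.distrib sum_distrib_left algebra_simps)
  qed
  finally show ?thesis .
qed

lemma trace_herm_real: assumes A: "A \<in> carrier_mat n n" "madj A = A" and B: "B \<in> carrier_mat n n" "madj B = B"
  shows "mtrace (A * B) = complex_of_real (Re (mtrace (A * B)))"
proof -
  have "cnj (mtrace (A * B)) = (\<Sum>i<n. \<Sum>l<n. cnj (A $$ (i,l)) * cnj (B $$ (l,i)))"
    unfolding mtrace_mult[OF A(1) B(1)] by (simp add: cnj_sum)
  also have "\<dots> = (\<Sum>i<n. \<Sum>l<n. A $$ (l,i) * B $$ (i,l))"
  proof (intro sum.cong refl)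
    fix i l assume "i \<in> {..<n}" "l \<in> {..<n}"
    then have "A $$ (l,i) = cnj (A $$ (i,l))" "B $$ (i,l) = cnj (B $$ (l,i))"
      by (intro herm_entry[OF A(2) A(1)] herm_entry[OF B(2) B(1)]; simp)+
    then show "cnj (A $$ (i,l)) * cnj (B $$ (l,i)) = A $$ (l,i) * B $$ (i,l)" by simp
  qed
  also have "\<dots> = mtrace (A * B)" unfolding mtrace_mult[OF A(1) B(1)] by (rule sum.swap)
  finally have h: "cnj (mtrace (A * B)) = mtrace (A * B)" .
  have "Im (mtrace (A * B)) = 0" using arg_cong[where f=Im, OF h] by simp
  then show ?thesis by (simp add: complex_eq_iff)
qed

lemma corr_eq: assumes K1: "K1 \<in> carrier_mat n n" and K2: "K2 \<in> carrier_mat n n" "madj K2 = K2"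
  and G: "\<And>s. P (proj n K1 s * \<rho> * proj n K1 s) \<in> carrier_mat n n \<and> madj (P (proj n K1 s * \<rho> * proj n K1 s)) = P (proj n K1 s * \<rho> * proj n K1 s)"
  shows "complex_of_real (corr n P K1 K2 \<rho>) = mtrace (K2 * P (proj n K1 1 * \<rho> * proj n K1 1)) - mtrace (K2 * P (proj n K1 (-1) * \<rho> * proj n K1 (-1)))"
proof -
  define G1 where "G1 = P (proj n K1 1 * \<rho> * proj n K1 1)"
  define G2 where "G2 = P (proj n K1 (-1) * \<rho> * proj n K1 (-1))"
  have g1: "G1 \<in> carrier_mat n n" "madj G1 = G1" and g2: "G2 \<in> carrier_mat n n" "madj G2 = G2"
    using G unfolding G1_def G2_def by auto
  have r1: "mtrace (K2 * G1) = complex_of_real (Re (mtrace (K2 * G1)))" by (rule trace_herm_real[OF K2 g1])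
  have r2: "mtrace (K2 * G2) = complex_of_real (Re (mtrace (K2 * G2)))" by (rule trace_herm_real[OF K2 g2])
  have "corr n P K1 K2 \<rho> = (Re (mtrace (proj n K2 1 * G1)) - Re (mtrace (proj n K2 (-1) * G1)))
      - (Re (mtrace (proj n K2 1 * G2)) - Re (mtrace (proj n K2 (-1) * G2)))"
    unfolding corr_def G1_def G2_def by simp
  also have "\<dots> = Re (mtrace (K2 * G1)) - Re (mtrace (K2 * G2))"
    by (simp add: proj_trace[OF K2(1) g1(1)] proj_trace[OF K2(1) g2(1)] algebra_simps)
  finally show ?thesis using r1 r2 unfolding G1_def G2_def
    by (metis of_real_diff)
qed

lemma madj_kron: "madj (kron A B) = kron (madj A) (madj B)"
proof (rule eq_matI)
  fix i j assume ij: "i < dim_row (kron (madj A) (madj B))" "j < dim_col (kron (madj A) (madj B))"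
  then have i: "i < dim_col A * dim_col B" and j: "j < dim_row A * dim_row B" by auto
  have "dim_col B > 0" using i by (metis mult_0_right not_less_zero gr0I)
  moreover have "dim_row B > 0" using j by (metis mult_0_right not_less_zero gr0I)
  ultimately have b: "i div dim_col B < dim_col A" "i mod dim_col B < dim_col B" "j div dim_row B < dim_row A" "j mod dim_row B < dim_row B"
    using i j by (auto simp: less_mult_imp_div_less)
  show "madj (kron A B) $$ (i,j) = kron (madj A) (madj B) $$ (i,j)"
    using i j b by (simp add: kron_index)
qed auto

lemma pauli_herm: "madj (pauli k) = pauli k"
proof (rule eq_matI)
  fix i j assume ij: "i < dim_row (pauli k)" "j < dim_col (pauli k)"
  then have i: "i < 2" and j: "j < 2" by auto
  show "madj (pauli k) $$ (i,j) = pauli k $$ (i,j)"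
    using less2[OF i] less2[OF j] by (elim disjE) (auto simp: pauli_entry)
qed auto

lemma pauli_str_herm: "madj (pauli_str ks) = pauli_str ks"
  by (induction ks) (auto simp: madj_kron pauli_herm)

lemma madj_proj: assumes "K \<in> carrier_mat n n" "madj K = K" shows "madj (proj n K s) = proj n K s"
  unfolding proj_def using assms by (simp add: madj_smult madj_add[of _ n n])

lemma ampl_one: assumes X: "X \<in> carrier_mat din din" and PX: "\<Phi> X \<in> carrier_mat dout dout"
  shows "ampl 1 din dout \<Phi> X = \<Phi> X"
proof -
  have "mat din din (\<lambda>(p,q). X $$ (p,q)) = X" by (rule eq_matI) (use X in auto)
  then show ?thesis unfolding ampl_def by (intro eq_matI) (use PX in auto)
qed

lemma cp_psd: assumes cp: "cp_map din dout \<Phi>" and X: "psd din X" shows "psd dout (\<Phi> X)"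
proof -
  have Xc: "X \<in> carrier_mat din din" using X unfolding psd_def by auto
  have Pl: "linear_op din dout \<Phi>" using cp unfolding cp_map_def by auto
  have PX: "\<Phi> X \<in> carrier_mat dout dout" using linear_opD(1)[OF Pl Xc] .
  have "\<forall>k X. psd (k*din) X \<longrightarrow> psd (k*dout) (ampl k din dout \<Phi> X)" using cp unfolding cp_map_def by auto
  then have "psd (1*din) X \<longrightarrow> psd (1*dout) (ampl 1 din dout \<Phi> X)" by blast
  then have "psd dout (ampl 1 din dout \<Phi> X)" using X by (simp only: mult_1)
  then show ?thesis using ampl_one[where \<Phi>=\<Phi>, OF Xc PX] by simp
qed

lemma double_delta: assumes "a < (n::nat)" "a' < n"
  shows "(\<Sum>x<n. \<Sum>y<n. (f x y :: complex) * (if x = a' \<and> y = a then c else 0)) = f a' a * c"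
proof -
  have "(\<Sum>x<n. \<Sum>y<n. f x y * (if x = a' \<and> y = a then c else 0)) = (\<Sum>x<n. if x = a' then f x a * c else 0)"
  proof (rule sum.cong[OF refl])
    fix x assume x: "x \<in> {..<n}"
    have "(\<Sum>y<n. f x y * (if x = a' \<and> y = a then c else 0)) = (\<Sum>y<n. if y = a then (if x = a' then f x y * c else 0) else 0)"
      by (intro sum.cong) auto
    also have "\<dots> = (if x = a' then f x a * c else 0)" using assms by simp
    finally show "(\<Sum>y<n. f x y * (if x = a' \<and> y = a then c else 0)) = (if x = a' then f x a * c else 0)" .
  qed
  also have "\<dots> = f a' a * c" using assms by simp
  finally show ?thesis .
qed

lemma pauli_complete: assumes M: "M \<in> carrier_mat (2^n) (2^n)" and a: "a < 2^n" "a' < 2^n"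
  shows "(\<Sum>k\<in>pauli_idx n. mtrace (pauli_str k * M) * pauli_str k $$ (a,a')) = 2^n * M $$ (a,a')"
proof -
  have "(\<Sum>k\<in>pauli_idx n. mtrace (pauli_str k * M) * pauli_str k $$ (a,a'))
      = (\<Sum>k\<in>pauli_idx n. \<Sum>x<2^n. \<Sum>y<2^n. M $$ (y,x) * (pauli_str k $$ (x,y) * pauli_str k $$ (a,a')))"
  proof (rule sum.cong[OF refl])
    fix k assume k: "k \<in> pauli_idx n"
    then have sk: "pauli_str k \<in> carrier_mat (2^n) (2^n)" using pauli_str_carrier[of k] by (simp add: pauli_idx_def)
    show "mtrace (pauli_str k * M) * pauli_str k $$ (a,a') = (\<Sum>x<2^n. \<Sum>y<2^n. M $$ (y,x) * (pauli_str k $$ (x,y) * pauli_str k $$ (a,a')))"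
      unfolding mtrace_mult[OF sk M] by (simp add: sum_distrib_left mult_ac)
  qed
  also have "\<dots> = (\<Sum>x<2^n. \<Sum>y<2^n. M $$ (y,x) * (\<Sum>k\<in>pauli_idx n. pauli_str k $$ (x,y) * pauli_str k $$ (a,a')))"
    by (simp add: sum_distrib_left sum.swap[of _ "pauli_idx n"])
  also have "\<dots> = (\<Sum>x<2^n. \<Sum>y<2^n. M $$ (y,x) * (if x = a' \<and> y = a then 2^n else 0))"
    using a by (intro sum.cong refl) (simp add: pauli_sum)
  also have "\<dots> = M $$ (a,a') * 2^n" by (rule double_delta[OF a])
  finally show ?thesis by simp
qed

lemma lin_minus: assumes Tl: "linear_op d d' T" and A: "A \<in> carrier_mat d d" and B: "B \<in> carrier_mat d d"
  shows "T (A - B) = T A - T B"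
proof -
  have e: "A - B = A + (-1) \<cdot>\<^sub>m B" by (rule eq_matI) (use A B in auto)
  have TB: "T B \<in> carrier_mat d' d'" using linear_opD(1)[OF Tl B] .
  have "T (A - B) = T A + (-1) \<cdot>\<^sub>m T B" unfolding e using A B by (simp add: linear_opD[OF Tl])
  also have "\<dots> = T A - T B" by (rule eq_matI) (use TB in auto)
  finally show ?thesis .
qed

lemma lin_sum: assumes Tl: "linear_op d d T" and F: "finite F" and M: "\<And>x. x \<in> F \<Longrightarrow> M x \<in> carrier_mat d d"
  shows "T (mat d d (\<lambda>(p,q). \<Sum>x\<in>F. c x * M x $$ (p,q))) = mat d d (\<lambda>(p,q). \<Sum>x\<in>F. c x * T (M x) $$ (p,q))"
  using F M
proof (induction F rule: finite_induct)
  case empty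
  have T0: "T (0\<^sub>m d d) \<in> carrier_mat d d" using linear_opD(1)[OF Tl] by simp
  have "T (0\<^sub>m d d) = T ((0::complex) \<cdot>\<^sub>m 0\<^sub>m d d)" by simp
  also have "\<dots> = 0 \<cdot>\<^sub>m T (0\<^sub>m d d)" by (rule linear_opD(3)[OF Tl]) simp
  also have "\<dots> = 0\<^sub>m d d" by (rule eq_matI) (use T0 in auto)
  finally have Z: "T (0\<^sub>m d d) = 0\<^sub>m d d" .
  have m0: "mat d d (\<lambda>a. 0) = (0\<^sub>m d d :: complex mat)" by (rule eq_matI) auto
  show ?case using Z m0 by simp
next
  case (insert x F)
  have Mx: "M x \<in> carrier_mat d d" using insert by simp
  have TMx: "T (M x) \<in> carrier_mat d d" using linear_opD(1)[OF Tl Mx] .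
  have dims: "dim_row (M x) = d" "dim_col (M x) = d" "dim_row (T (M x)) = d" "dim_col (T (M x)) = d" using Mx TMx by auto
  have e: "mat d d (\<lambda>(p,q). \<Sum>y\<in>insert x F. c y * M y $$ (p,q)) = c x \<cdot>\<^sub>m M x + mat d d (\<lambda>(p,q). \<Sum>y\<in>F. c y * M y $$ (p,q))"
    by (rule eq_matI) (use insert dims in auto)
  have "T (mat d d (\<lambda>(p,q). \<Sum>y\<in>insert x F. c y * M y $$ (p,q))) = c x \<cdot>\<^sub>m T (M x) + T (mat d d (\<lambda>(p,q). \<Sum>y\<in>F. c y * M y $$ (p,q)))"
    unfolding e using Mx by (simp add: linear_opD[OF Tl])
  also have "T (mat d d (\<lambda>(p,q). \<Sum>y\<in>F. c y * M y $$ (p,q))) = mat d d (\<lambda>(p,q). \<Sum>y\<in>F. c y * T (M y) $$ (p,q))"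
    by (rule insert.IH) (use insert.prems in auto)
  also have "c x \<cdot>\<^sub>m T (M x) + mat d d (\<lambda>(p,q). \<Sum>y\<in>F. c y * T (M y) $$ (p,q)) = mat d d (\<lambda>(p,q). \<Sum>y\<in>insert x F. c y * T (M y) $$ (p,q))"
  proof (rule eq_matI)
    fix i j assume "i < dim_row (mat d d (\<lambda>(p,q). \<Sum>y\<in>insert x F. c y * T (M y) $$ (p,q)))"
      "j < dim_col (mat d d (\<lambda>(p,q). \<Sum>y\<in>insert x F. c y * T (M y) $$ (p,q)))"
    then have ij: "i < d" "j < d" by auto
    show "(c x \<cdot>\<^sub>m T (M x) + mat d d (\<lambda>(p,q). \<Sum>y\<in>F. c y * T (M y) $$ (p,q))) $$ (i,j) = mat d d (\<lambda>(p,q). \<Sum>y\<in>insert x F. c y * T (M y) $$ (p,q)) $$ (i,j)"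
      using ij dims insert.hyps by simp
  qed (use dims in auto)
  finally show ?case .
qed

definition swapAB :: "nat \<Rightarrow> nat \<Rightarrow> complex mat \<Rightarrow> complex mat" where
  "swapAB dA dB \<rho> = mat (dB*dA) (dB*dA) (\<lambda>(i,j). \<rho> $$ ((i mod dA)*dB + i div dA, (j mod dA)*dB + j div dA))"

lemma swapAB_index: "b < dB \<Longrightarrow> a < dA \<Longrightarrow> b' < dB \<Longrightarrow> a' < dA \<Longrightarrow>
  swapAB dA dB \<rho> $$ (b*dA+a, b'*dA+a') = \<rho> $$ (a*dB+b, a'*dB+b')"
  unfolding swapAB_def by (simp add: idx_bound[of b dB a dA, simplified mult.commute] idx_bound)

lemma swapAB_psd: assumes r: "psd (dA*dB) \<rho>" shows "psd (dB*dA) (swapAB dA dB \<rho>)"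
proof -
  have rc: "\<rho> \<in> carrier_mat (dA*dB) (dA*dB)" "madj \<rho> = \<rho>" using r unfolding psd_def by auto
  have Sc: "swapAB dA dB \<rho> \<in> carrier_mat (dB*dA) (dB*dA)" unfolding swapAB_def by simp
  have pi: "(i mod dA)*dB + i div dA < dA*dB" if "i < dB*dA" for i
  proof -
    have "dA > 0" using that by (cases "dA = 0") auto
    then show ?thesis using that by (intro idx_bound) (auto simp: less_mult_imp_div_less mult.commute)
  qed
  have herm: "madj (swapAB dA dB \<rho>) = swapAB dA dB \<rho>"
  proof (rule eq_matI)
    fix i j assume "i < dim_row (swapAB dA dB \<rho>)" "j < dim_col (swapAB dA dB \<rho>)"
    then have ij: "i < dB*dA" "j < dB*dA" unfolding swapAB_def by auto
    show "madj (swapAB dA dB \<rho>) $$ (i,j) = swapAB dA dB \<rho> $$ (i,j)"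
      using ij pi[OF ij(1)] pi[OF ij(2)] herm_entry[OF rc(2) rc(1) pi[OF ij(2)] pi[OF ij(1)]]
      unfolding swapAB_def by simp
  qed (simp_all add: swapAB_def)
  have "0 \<le> Re ((swapAB dA dB \<rho> *\<^sub>v v) \<bullet>c v)" if v: "v \<in> carrier_vec (dB*dA)" for v
  proof -
    define w where "w = vec (dA*dB) (\<lambda>l. v $ ((l mod dB)*dA + l div dB))"
    have w: "w \<in> carrier_vec (dA*dB)" unfolding w_def by simp
    have wi: "w $ (a*dB+b) = v $ (b*dA+a)" if "a < dA" "b < dB" for a b
      unfolding w_def using that by (simp add: idx_bound)
    have "(swapAB dA dB \<rho> *\<^sub>v v) \<bullet>c v = (\<Sum>i<dB*dA. (\<Sum>j<dB*dA. swapAB dA dB \<rho> $$ (i,j) * v $ j) * cnj (v $ i))"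
      by (rule quad_sum[OF Sc v])
    also have "\<dots> = (\<Sum>b<dB. \<Sum>a<dA. (\<Sum>b'<dB. \<Sum>a'<dA. \<rho> $$ (a*dB+b, a'*dB+b') * v $ (b'*dA+a')) * cnj (v $ (b*dA+a)))"
      unfolding sum_split by (intro sum.cong refl) (simp add: swapAB_index)
    also have "\<dots> = (\<Sum>b<dB. \<Sum>a<dA. (\<Sum>a'<dA. \<Sum>b'<dB. \<rho> $$ (a*dB+b, a'*dB+b') * v $ (b'*dA+a')) * cnj (v $ (b*dA+a)))"
    proof (rule sum.cong[OF refl], rule sum.cong[OF refl])
      fix b a
      show "(\<Sum>b'<dB. \<Sum>a'<dA. \<rho> $$ (a*dB+b, a'*dB+b') * v $ (b'*dA+a')) * cnj (v $ (b*dA+a)) =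
        (\<Sum>a'<dA. \<Sum>b'<dB. \<rho> $$ (a*dB+b, a'*dB+b') * v $ (b'*dA+a')) * cnj (v $ (b*dA+a))"
        by (subst sum.swap) (rule refl)
    qed
    also have "\<dots> = (\<Sum>a<dA. \<Sum>b<dB. (\<Sum>a'<dA. \<Sum>b'<dB. \<rho> $$ (a*dB+b, a'*dB+b') * v $ (b'*dA+a')) * cnj (v $ (b*dA+a)))"
      by (rule sum.swap)
    also have "\<dots> = (\<Sum>a<dA. \<Sum>b<dB. (\<Sum>a'<dA. \<Sum>b'<dB. \<rho> $$ (a*dB+b, a'*dB+b') * w $ (a'*dB+b')) * cnj (w $ (a*dB+b)))"
      by (intro sum.cong refl) (simp add: wi)
    also have "\<dots> = (\<rho> *\<^sub>v w) \<bullet>c w"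
      unfolding quad_sum[OF rc(1) w] sum_split by simp
    finally show ?thesis using r w unfolding psd_def by simp
  qed
  then show ?thesis unfolding psd_def using Sc herm by simp
qed

lemma mtrace_ptrace_B: assumes "M \<in> carrier_mat (dA*dB) (dA*dB)" shows "mtrace (ptrace_B dA dB M) = mtrace M"
  using assms unfolding mtrace_def by (simp add: ptrace_B_index sum_split)

lemma mtrace_ptrace_A: assumes "M \<in> carrier_mat (dA*dB) (dA*dB)" shows "mtrace (ptrace_A dA dB M) = mtrace M"
  using assms unfolding mtrace_def by (simp add: ptrace_A_index sum_split sum.swap[of _ "{..<dB}"])

lemma mtrace_ampl: assumes Tl: "linear_op d d T" and X: "X \<in> carrier_mat (k*d) (k*d)"
  shows "mtrace (ampl k d d T X) = mtrace (T (mat d d (\<lambda>(p,q). \<Sum>b<k. 1 * mat d d (\<lambda>(p,q). X $$ (b*d+p, b*d+q)) $$ (p,q))))"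
proof -
  let ?B = "\<lambda>b. mat d d (\<lambda>(p,q). X $$ (b*d+p, b*d+q))"
  have "mtrace (ampl k d d T X) = (\<Sum>b<k. \<Sum>a<d. T (?B b) $$ (a,a))"
    unfolding mtrace_def ampl_def by (simp add: sum_split idx_bound)
  also have "\<dots> = mtrace (mat d d (\<lambda>(p,q). \<Sum>b<k. 1 * T (?B b) $$ (p,q)))"
    unfolding mtrace_def by (simp add: sum.swap[of _ "{..<d}"])
  also have "mat d d (\<lambda>(p,q). \<Sum>b<k. 1 * T (?B b) $$ (p,q)) = T (mat d d (\<lambda>(p,q). \<Sum>b<k. 1 * ?B b $$ (p,q)))"
    by (rule lin_sum[symmetric, OF Tl]) auto
  finally show ?thesis .
qed

definition XB :: "nat \<Rightarrow> nat \<Rightarrow> complex mat \<Rightarrow> complex mat \<Rightarrow> real \<Rightarrow> complex mat" where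
  "XB dA dB \<sigma> \<rho> s = proj (dA*dB) (kron (1\<^sub>m dA) \<sigma>) s * \<rho> * proj (dA*dB) (kron (1\<^sub>m dA) \<sigma>) s"

definition DB :: "nat \<Rightarrow> nat \<Rightarrow> complex mat \<Rightarrow> complex mat \<Rightarrow> complex mat" where
  "DB dA dB \<sigma> \<rho> = ptrace_B dA dB (XB dA dB \<sigma> \<rho> 1) - ptrace_B dA dB (XB dA dB \<sigma> \<rho> (-1))"

lemma DB_carrier[simp]: "DB dA dB \<sigma> \<rho> \<in> carrier_mat dA dA"
  unfolding DB_def by (simp add: minus_carrier_mat)

lemma mtrace_minus_mult: assumes "A \<in> carrier_mat n n" "B \<in> carrier_mat n n" "C \<in> carrier_mat n n"
  shows "mtrace (A * B) - mtrace (A * C) = mtrace (A * (B - C))"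
proof -
  have BC: "B - C \<in> carrier_mat n n" using assms by (simp add: minus_carrier_mat)
  show ?thesis unfolding mtrace_mult[OF assms(1,2)] mtrace_mult[OF assms(1,3)] mtrace_mult[OF assms(1) BC]
    using assms by (simp add: sum_subtractf[symmetric] algebra_simps)
qed

lemma corrB: assumes Pcp: "cp_map (dA*dB) (dA*dB) P" and Tl: "linear_op dA dA T"
  and ns: "\<forall>\<rho>. density (dA*dB) \<rho> \<longrightarrow> ptrace_B dA dB (P \<rho>) = T (ptrace_B dA dB \<rho>)"
  and r: "density (dA*dB) \<rho>"
  and sj: "\<sigma>j \<in> carrier_mat dB dB" "madj \<sigma>j = \<sigma>j" and sk: "\<sigma>k \<in> carrier_mat dA dA" "madj \<sigma>k = \<sigma>k"
  shows "complex_of_real (corr (dA*dB) P (kron (1\<^sub>m dA) \<sigma>j) (kron \<sigma>k (1\<^sub>m dB)) \<rho>) = mtrace (\<sigma>k * T (DB dA dB \<sigma>j \<rho>))"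
proof -
  let ?N = "dA*dB"
  let ?K1 = "kron (1\<^sub>m dA) \<sigma>j"
  let ?K2 = "kron \<sigma>k (1\<^sub>m dB)"
  have Pl: "linear_op ?N ?N P" using Pcp unfolding cp_map_def by auto
  have rp: "psd ?N \<rho>" using r unfolding density_def by auto
  have K1: "?K1 \<in> carrier_mat ?N ?N" "madj ?K1 = ?K1" using kron_carrier[OF _ sj(1), of "1\<^sub>m dA" dA dA] sj by (auto simp: madj_kron)
  have K2: "?K2 \<in> carrier_mat ?N ?N" "madj ?K2 = ?K2" using kron_carrier[OF sk(1), of "1\<^sub>m dB" dB dB] sk by (auto simp: madj_kron)
  have Xp: "psd ?N (XB dA dB \<sigma>j \<rho> s)" for s
    unfolding XB_def by (rule psd_conj[OF rp]) (use K1 madj_proj[OF K1] in auto)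
  have G: "psd ?N (P (XB dA dB \<sigma>j \<rho> s))" for s by (rule cp_psd[OF Pcp Xp])
  have Gc: "P (XB dA dB \<sigma>j \<rho> s) \<in> carrier_mat ?N ?N \<and> madj (P (XB dA dB \<sigma>j \<rho> s)) = P (XB dA dB \<sigma>j \<rho> s)" for s
    using G[of s] unfolding psd_def by auto
  have "complex_of_real (corr ?N P ?K1 ?K2 \<rho>) = mtrace (?K2 * P (XB dA dB \<sigma>j \<rho> 1)) - mtrace (?K2 * P (XB dA dB \<sigma>j \<rho> (-1)))"
    unfolding XB_def by (rule corr_eq[OF K1(1) K2]) (use Gc in \<open>simp add: XB_def\<close>)
  also have "\<dots> = mtrace (\<sigma>k * ptrace_B dA dB (P (XB dA dB \<sigma>j \<rho> 1))) - mtrace (\<sigma>k * ptrace_B dA dB (P (XB dA dB \<sigma>j \<rho> (-1))))"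
    using Gc by (simp add: trace_kron_B[OF sk(1)])
  also have "\<dots> = mtrace (\<sigma>k * T (ptrace_B dA dB (XB dA dB \<sigma>j \<rho> 1))) - mtrace (\<sigma>k * T (ptrace_B dA dB (XB dA dB \<sigma>j \<rho> (-1))))"
    by (simp add: ns_B[OF Pl Tl ns r Xp])
  also have "\<dots> = mtrace (\<sigma>k * (T (ptrace_B dA dB (XB dA dB \<sigma>j \<rho> 1)) - T (ptrace_B dA dB (XB dA dB \<sigma>j \<rho> (-1)))))"
    by (rule mtrace_minus_mult[OF sk(1)]) (use linear_opD(1)[OF Tl] in auto)
  also have "\<dots> = mtrace (\<sigma>k * T (DB dA dB \<sigma>j \<rho>))"
    unfolding DB_def by (subst lin_minus[OF Tl]) auto
  finally show ?thesis .
qed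

lemma DB_index: assumes s: "\<sigma> \<in> carrier_mat dB dB" and r: "\<rho> \<in> carrier_mat (dA*dB) (dA*dB)" and pq: "p < dA" "q < dA"
  shows "DB dA dB \<sigma> \<rho> $$ (p,q) = (1/2) * ((\<Sum>c<dB. \<Sum>c'<dB. \<sigma> $$ (c,c') * \<rho> $$ (p*dB+c', q*dB+c))
      + (\<Sum>c<dB. \<Sum>c'<dB. \<rho> $$ (p*dB+c, q*dB+c') * \<sigma> $$ (c',c)))"
proof -
  let ?N = "dA*dB"
  let ?K = "kron (1\<^sub>m dA) \<sigma>"
  have K: "?K \<in> carrier_mat ?N ?N" using kron_carrier[OF _ s, of "1\<^sub>m dA" dA dA] by simp
  have "DB dA dB \<sigma> \<rho> $$ (p,q) = ptrace_B dA dB (XB dA dB \<sigma> \<rho> 1) $$ (p,q) - ptrace_B dA dB (XB dA dB \<sigma> \<rho> (-1)) $$ (p,q)"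
    unfolding DB_def using pq by simp
  also have "\<dots> = (\<Sum>c<dB. XB dA dB \<sigma> \<rho> 1 $$ (p*dB+c, q*dB+c) - XB dA dB \<sigma> \<rho> (-1) $$ (p*dB+c, q*dB+c))"
    using pq by (simp add: ptrace_B_index sum_subtractf)
  also have "\<dots> = (\<Sum>c<dB. (1/2) * ((?K * \<rho>) $$ (p*dB+c, q*dB+c) + (\<rho> * ?K) $$ (p*dB+c, q*dB+c)))"
    unfolding XB_def using pq by (intro sum.cong refl meas_diff[OF K r]) (auto simp: idx_bound)
  also have "\<dots> = (1/2) * (ptrace_B dA dB (?K * \<rho>) $$ (p,q) + ptrace_B dA dB (\<rho> * ?K) $$ (p,q))"
    by (simp only: ptrace_B_index[OF pq] sum.distrib[symmetric] sum_distrib_left)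
  also have "\<dots> = (1/2) * ((\<Sum>c<dB. \<Sum>c'<dB. \<sigma> $$ (c,c') * \<rho> $$ (p*dB+c', q*dB+c))
      + (\<Sum>c<dB. \<Sum>c'<dB. \<rho> $$ (p*dB+c, q*dB+c') * \<sigma> $$ (c',c)))"
    by (simp add: ptB_Krho[OF s r pq] ptB_rhoK[OF s r pq])
  finally show ?thesis .
qed

lemma swap3: "(\<Sum>j\<in>J. (x j :: complex) * (\<Sum>c\<in>C. \<Sum>c'\<in>C'. F j c c')) = (\<Sum>c\<in>C. \<Sum>c'\<in>C'. \<Sum>j\<in>J. x j * F j c c')"
proof -
  have "(\<Sum>j\<in>J. x j * (\<Sum>c\<in>C. \<Sum>c'\<in>C'. F j c c')) = (\<Sum>j\<in>J. \<Sum>c\<in>C. \<Sum>c'\<in>C'. x j * F j c c')"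
    by (simp add: sum_distrib_left)
  also have "\<dots> = (\<Sum>c\<in>C. \<Sum>j\<in>J. \<Sum>c'\<in>C'. x j * F j c c')" by (rule sum.swap)
  also have "\<dots> = (\<Sum>c\<in>C. \<Sum>c'\<in>C'. \<Sum>j\<in>J. x j * F j c c')" by (intro sum.cong refl) (rule sum.swap)
  finally show ?thesis .
qed

lemma W_B: assumes r: "\<rho> \<in> carrier_mat (2^nA*2^nB) (2^nA*2^nB)" and b: "b < 2^nB" "b' < 2^nB" and pq: "p < 2^nA" "q < 2^nA"
  shows "(\<Sum>j\<in>pauli_idx nB. pauli_str j $$ (b,b') * DB (2^nA) (2^nB) (pauli_str j) \<rho> $$ (p,q))
     = 2^nB * \<rho> $$ (p*2^nB+b, q*2^nB+b')"
proof -
  let ?dB = "2^nB::nat"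
  let ?s = "\<lambda>j. pauli_str j"
  have sc: "?s j \<in> carrier_mat ?dB ?dB" if "j \<in> pauli_idx nB" for j
    using that pauli_str_carrier[of j] by (simp add: pauli_idx_def)
  have "(\<Sum>j\<in>pauli_idx nB. ?s j $$ (b,b') * DB (2^nA) ?dB (?s j) \<rho> $$ (p,q))
    = (\<Sum>j\<in>pauli_idx nB. (1/2) * (?s j $$ (b,b') * (\<Sum>c<?dB. \<Sum>c'<?dB. ?s j $$ (c,c') * \<rho> $$ (p*?dB+c', q*?dB+c)))
        + (1/2) * (?s j $$ (b,b') * (\<Sum>c<?dB. \<Sum>c'<?dB. \<rho> $$ (p*?dB+c, q*?dB+c') * ?s j $$ (c',c))))"
    by (intro sum.cong refl) (simp add: DB_index[OF sc r pq] algebra_simps)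
  also have "\<dots> = (1/2) * (\<Sum>c<?dB. \<Sum>c'<?dB. \<Sum>j\<in>pauli_idx nB. ?s j $$ (b,b') * (?s j $$ (c,c') * \<rho> $$ (p*?dB+c', q*?dB+c)))
        + (1/2) * (\<Sum>c<?dB. \<Sum>c'<?dB. \<Sum>j\<in>pauli_idx nB. ?s j $$ (b,b') * (\<rho> $$ (p*?dB+c, q*?dB+c') * ?s j $$ (c',c)))"
    by (simp only: sum.distrib sum_distrib_left[symmetric] swap3)
  also have "\<dots> = (1/2) * (\<Sum>c<?dB. \<Sum>c'<?dB. \<rho> $$ (p*?dB+c', q*?dB+c) * (if c = b' \<and> c' = b then 2^nB else 0))
        + (1/2) * (\<Sum>c<?dB. \<Sum>c'<?dB. \<rho> $$ (p*?dB+c, q*?dB+c') * (if c = b \<and> c' = b' then 2^nB else 0))"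
  proof -
    have e1: "(\<Sum>j\<in>pauli_idx nB. ?s j $$ (b,b') * (?s j $$ (c,c') * \<rho> $$ (p*?dB+c', q*?dB+c)))
        = \<rho> $$ (p*?dB+c', q*?dB+c) * (if c = b' \<and> c' = b then 2^nB else 0)" if "c < ?dB" "c' < ?dB" for c c'
    proof -
      have "(\<Sum>j\<in>pauli_idx nB. ?s j $$ (b,b') * (?s j $$ (c,c') * \<rho> $$ (p*?dB+c', q*?dB+c)))
          = (\<Sum>j\<in>pauli_idx nB. ?s j $$ (b,b') * ?s j $$ (c,c')) * \<rho> $$ (p*?dB+c', q*?dB+c)"
        by (simp add: sum_distrib_right mult_ac)
      also have "\<dots> = \<rho> $$ (p*?dB+c', q*?dB+c) * (if c = b' \<and> c' = b then 2^nB else 0)"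
        using pauli_sum[OF b that] by auto
      finally show ?thesis .
    qed
    have e2: "(\<Sum>j\<in>pauli_idx nB. ?s j $$ (b,b') * (\<rho> $$ (p*?dB+c, q*?dB+c') * ?s j $$ (c',c)))
        = \<rho> $$ (p*?dB+c, q*?dB+c') * (if c = b \<and> c' = b' then 2^nB else 0)" if "c < ?dB" "c' < ?dB" for c c'
    proof -
      have "(\<Sum>j\<in>pauli_idx nB. ?s j $$ (b,b') * (\<rho> $$ (p*?dB+c, q*?dB+c') * ?s j $$ (c',c)))
          = (\<Sum>j\<in>pauli_idx nB. ?s j $$ (b,b') * ?s j $$ (c',c)) * \<rho> $$ (p*?dB+c, q*?dB+c')"
        by (simp add: sum_distrib_right mult_ac)
      also have "\<dots> = \<rho> $$ (p*?dB+c, q*?dB+c') * (if c = b \<and> c' = b' then 2^nB else 0)"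
        using pauli_sum[OF b that(2) that(1)] by auto
      finally show ?thesis .
    qed
    show ?thesis using e1 e2 by simp
  qed
  also have "\<dots> = (1/2) * (\<rho> $$ (p*?dB+b, q*?dB+b') * 2^nB) + (1/2) * (\<rho> $$ (p*?dB+b, q*?dB+b') * 2^nB)"
    using double_delta[OF b(1) b(2), of "\<lambda>c c'. \<rho> $$ (p*?dB+c', q*?dB+c)" "2^nB"]
      double_delta[OF b(2) b(1), of "\<lambda>c c'. \<rho> $$ (p*?dB+c, q*?dB+c')" "2^nB"] by simp
  also have "\<dots> = 2^nB * \<rho> $$ (p*?dB+b, q*?dB+b')" by simp
  finally show ?thesis .
qed

lemma pauli_idx_carrier: "j \<in> pauli_idx n \<Longrightarrow> pauli_str j \<in> carrier_mat (2^n) (2^n)"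
  using pauli_str_carrier[of j] by (simp add: pauli_idx_def)

lemma R_B1A2_ampl: assumes Pcp: "cp_map (2^nA*2^nB) (2^nA*2^nB) P" and Tl: "linear_op (2^nA) (2^nA) T"
  and ns: "\<forall>\<rho>. density (2^nA*2^nB) \<rho> \<longrightarrow> ptrace_B (2^nA) (2^nB) (P \<rho>) = T (ptrace_B (2^nA) (2^nB) \<rho>)"
  and r: "density (2^nA*2^nB) \<rho>"
  shows "R_B1A2 nA nB P \<rho> = ampl (2^nB) (2^nA) (2^nA) T (swapAB (2^nA) (2^nB) \<rho>)"
proof (rule eq_matI)
  let ?dA = "2^nA::nat" and ?dB = "2^nB::nat"
  have rc: "\<rho> \<in> carrier_mat (?dA*?dB) (?dA*?dB)" using r unfolding density_def psd_def by auto
  fix i i' assume "i < dim_row (ampl ?dB ?dA ?dA T (swapAB ?dA ?dB \<rho>))" "i' < dim_col (ampl ?dB ?dA ?dA T (swapAB ?dA ?dB \<rho>))"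
  then have ii: "i < ?dB * ?dA" "i' < ?dB * ?dA" unfolding ampl_def by auto
  define b where "b = i div ?dA"
  define a where "a = i mod ?dA"
  define b' where "b' = i' div ?dA"
  define a' where "a' = i' mod ?dA"
  have ba: "b < ?dB" "a < ?dA" "b' < ?dB" "a' < ?dA" unfolding a_def b_def a'_def b'_def using ii
    by (auto simp: less_mult_imp_div_less mult.commute)
  let ?D = "\<lambda>j. DB ?dA ?dB (pauli_str j) \<rho>"
  have TD: "T (?D j) \<in> carrier_mat ?dA ?dA" for j using linear_opD(1)[OF Tl] by simp
  have cor: "complex_of_real (corr (?dA*?dB) P (kron (1\<^sub>m ?dA) (pauli_str j)) (kron (pauli_str k) (1\<^sub>m ?dB)) \<rho>)
     = mtrace (pauli_str k * T (?D j))" if "j \<in> pauli_idx nB" "k \<in> pauli_idx nA" for j k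
    by (rule corrB[OF Pcp Tl ns r]) (use that pauli_idx_carrier pauli_str_herm in auto)
  have "R_B1A2 nA nB P \<rho> $$ (i,i') = (\<Sum>j\<in>pauli_idx nB. \<Sum>k\<in>pauli_idx nA.
      complex_of_real (corr (?dA*?dB) P (kron (1\<^sub>m ?dA) (pauli_str j)) (kron (pauli_str k) (1\<^sub>m ?dB)) \<rho> / 2^(nA+nB))
       * kron (pauli_str j) (pauli_str k) $$ (i,i'))"
    unfolding R_B1A2_def using ii by simp
  also have "\<dots> = (\<Sum>j\<in>pauli_idx nB. pauli_str j $$ (b,b') / 2^nB * ((\<Sum>k\<in>pauli_idx nA. mtrace (pauli_str k * T (?D j)) * pauli_str k $$ (a,a')) / 2^nA))"
  proof (rule sum.cong[OF refl])
    fix j assume j: "j \<in> pauli_idx nB"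
    have lj: "length j = nB" using j by (simp add: pauli_idx_def)
    show "(\<Sum>k\<in>pauli_idx nA. complex_of_real (corr (?dA*?dB) P (kron (1\<^sub>m ?dA) (pauli_str j)) (kron (pauli_str k) (1\<^sub>m ?dB)) \<rho> / 2^(nA+nB))
       * kron (pauli_str j) (pauli_str k) $$ (i,i'))
      = pauli_str j $$ (b,b') / 2^nB * ((\<Sum>k\<in>pauli_idx nA. mtrace (pauli_str k * T (?D j)) * pauli_str k $$ (a,a')) / 2^nA)"
      unfolding sum_divide_distrib sum_distrib_left
    proof (rule sum.cong[OF refl])
      fix k assume k: "k \<in> pauli_idx nA"
      have lk: "length k = nA" using k by (simp add: pauli_idx_def)
      have "kron (pauli_str j) (pauli_str k) $$ (i,i') = pauli_str j $$ (b,b') * pauli_str k $$ (a,a')"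
        using ii lj lk unfolding a_def b_def a'_def b'_def by (simp add: kron_index)
      moreover have "complex_of_real (corr (?dA*?dB) P (kron (1\<^sub>m ?dA) (pauli_str j)) (kron (pauli_str k) (1\<^sub>m ?dB)) \<rho> / 2^(nA+nB))
          = mtrace (pauli_str k * T (?D j)) / (2^nA * 2^nB)"
        using cor[OF j k] by (simp add: power_add)
      ultimately show "complex_of_real (corr (?dA*?dB) P (kron (1\<^sub>m ?dA) (pauli_str j)) (kron (pauli_str k) (1\<^sub>m ?dB)) \<rho> / 2^(nA+nB))
       * kron (pauli_str j) (pauli_str k) $$ (i,i') = pauli_str j $$ (b,b') / 2^nB * (mtrace (pauli_str k * T (?D j)) * pauli_str k $$ (a,a') / 2^nA)"
        by (simp add: field_simps)
    qed
  qed
  also have "\<dots> = (\<Sum>j\<in>pauli_idx nB. pauli_str j $$ (b,b') / 2^nB * T (?D j) $$ (a,a'))"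
    by (intro sum.cong refl) (simp add: pauli_complete[OF TD ba(2) ba(4)])
  also have "\<dots> = mat ?dA ?dA (\<lambda>(p,q). \<Sum>j\<in>pauli_idx nB. pauli_str j $$ (b,b') / 2^nB * T (?D j) $$ (p,q)) $$ (a,a')"
    using ba by simp
  also have "mat ?dA ?dA (\<lambda>(p,q). \<Sum>j\<in>pauli_idx nB. pauli_str j $$ (b,b') / 2^nB * T (?D j) $$ (p,q))
      = T (mat ?dA ?dA (\<lambda>(p,q). \<Sum>j\<in>pauli_idx nB. pauli_str j $$ (b,b') / 2^nB * ?D j $$ (p,q)))"
    by (rule lin_sum[symmetric, OF Tl]) auto
  also have "mat ?dA ?dA (\<lambda>(p,q). \<Sum>j\<in>pauli_idx nB. pauli_str j $$ (b,b') / 2^nB * ?D j $$ (p,q))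
      = mat ?dA ?dA (\<lambda>(p,q). swapAB ?dA ?dB \<rho> $$ (b*?dA+p, b'*?dA+q))"
  proof (rule eq_matI)
    fix p q assume "p < dim_row (mat ?dA ?dA (\<lambda>(p,q). swapAB ?dA ?dB \<rho> $$ (b*?dA+p, b'*?dA+q)))"
      "q < dim_col (mat ?dA ?dA (\<lambda>(p,q). swapAB ?dA ?dB \<rho> $$ (b*?dA+p, b'*?dA+q)))"
    then have pq: "p < ?dA" "q < ?dA" by auto
    have "(\<Sum>j\<in>pauli_idx nB. pauli_str j $$ (b,b') / 2^nB * ?D j $$ (p,q))
        = (\<Sum>j\<in>pauli_idx nB. pauli_str j $$ (b,b') * ?D j $$ (p,q)) / 2^nB"
      by (simp add: sum_divide_distrib)
    also have "\<dots> = \<rho> $$ (p*?dB+b, q*?dB+b')" using W_B[OF rc ba(1) ba(3) pq] by simp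
    also have "\<dots> = swapAB ?dA ?dB \<rho> $$ (b*?dA+p, b'*?dA+q)" using swapAB_index[OF ba(1) pq(1) ba(3) pq(2)] by simp
    finally show "mat ?dA ?dA (\<lambda>(p,q). \<Sum>j\<in>pauli_idx nB. pauli_str j $$ (b,b') / 2^nB * ?D j $$ (p,q)) $$ (p,q)
      = mat ?dA ?dA (\<lambda>(p,q). swapAB ?dA ?dB \<rho> $$ (b*?dA+p, b'*?dA+q)) $$ (p,q)" using pq by simp
  qed auto
  also have "T (mat ?dA ?dA (\<lambda>(p,q). swapAB ?dA ?dB \<rho> $$ (b*?dA+p, b'*?dA+q))) $$ (a,a')
      = ampl ?dB ?dA ?dA T (swapAB ?dA ?dB \<rho>) $$ (i,i')"
    unfolding ampl_def using ii unfolding a_def b_def a'_def b'_def by simp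
  finally show "R_B1A2 nA nB P \<rho> $$ (i,i') = ampl ?dB ?dA ?dA T (swapAB ?dA ?dB \<rho>) $$ (i,i')" .
next
  show "dim_row (R_B1A2 nA nB P \<rho>) = dim_row (ampl (2^nB) (2^nA) (2^nA) T (swapAB (2^nA) (2^nB) \<rho>))"
    unfolding R_B1A2_def ampl_def by simp
  show "dim_col (R_B1A2 nA nB P \<rho>) = dim_col (ampl (2^nB) (2^nA) (2^nA) T (swapAB (2^nA) (2^nB) \<rho>))"
    unfolding R_B1A2_def ampl_def by simp
qed

definition XA :: "nat \<Rightarrow> nat \<Rightarrow> complex mat \<Rightarrow> complex mat \<Rightarrow> real \<Rightarrow> complex mat" where
  "XA dA dB \<sigma> \<rho> s = proj (dA*dB) (kron \<sigma> (1\<^sub>m dB)) s * \<rho> * proj (dA*dB) (kron \<sigma> (1\<^sub>m dB)) s"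

definition DA :: "nat \<Rightarrow> nat \<Rightarrow> complex mat \<Rightarrow> complex mat \<Rightarrow> complex mat" where
  "DA dA dB \<sigma> \<rho> = ptrace_A dA dB (XA dA dB \<sigma> \<rho> 1) - ptrace_A dA dB (XA dA dB \<sigma> \<rho> (-1))"

lemma DA_carrier[simp]: "DA dA dB \<sigma> \<rho> \<in> carrier_mat dB dB"
  unfolding DA_def by (simp add: minus_carrier_mat)

lemma corrA: assumes Pcp: "cp_map (dA*dB) (dA*dB) P" and Sl: "linear_op dB dB S"
  and ns: "\<forall>\<rho>. density (dA*dB) \<rho> \<longrightarrow> ptrace_A dA dB (P \<rho>) = S (ptrace_A dA dB \<rho>)"
  and r: "density (dA*dB) \<rho>"
  and si: "\<sigma>i \<in> carrier_mat dA dA" "madj \<sigma>i = \<sigma>i" and sl: "\<sigma>l \<in> carrier_mat dB dB" "madj \<sigma>l = \<sigma>l"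
  shows "complex_of_real (corr (dA*dB) P (kron \<sigma>i (1\<^sub>m dB)) (kron (1\<^sub>m dA) \<sigma>l) \<rho>) = mtrace (\<sigma>l * S (DA dA dB \<sigma>i \<rho>))"
proof -
  let ?N = "dA*dB"
  let ?K1 = "kron \<sigma>i (1\<^sub>m dB)"
  let ?K2 = "kron (1\<^sub>m dA) \<sigma>l"
  have Pl: "linear_op ?N ?N P" using Pcp unfolding cp_map_def by auto
  have rp: "psd ?N \<rho>" using r unfolding density_def by auto
  have K1: "?K1 \<in> carrier_mat ?N ?N" "madj ?K1 = ?K1" using kron_carrier[OF si(1), of "1\<^sub>m dB" dB dB] si by (auto simp: madj_kron)
  have K2: "?K2 \<in> carrier_mat ?N ?N" "madj ?K2 = ?K2" using kron_carrier[OF _ sl(1), of "1\<^sub>m dA" dA dA] sl by (auto simp: madj_kron)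
  have Xp: "psd ?N (XA dA dB \<sigma>i \<rho> s)" for s
    unfolding XA_def by (rule psd_conj[OF rp]) (use K1 madj_proj[OF K1] in auto)
  have G: "psd ?N (P (XA dA dB \<sigma>i \<rho> s))" for s by (rule cp_psd[OF Pcp Xp])
  have Gc: "P (XA dA dB \<sigma>i \<rho> s) \<in> carrier_mat ?N ?N \<and> madj (P (XA dA dB \<sigma>i \<rho> s)) = P (XA dA dB \<sigma>i \<rho> s)" for s
    using G[of s] unfolding psd_def by auto
  have "complex_of_real (corr ?N P ?K1 ?K2 \<rho>) = mtrace (?K2 * P (XA dA dB \<sigma>i \<rho> 1)) - mtrace (?K2 * P (XA dA dB \<sigma>i \<rho> (-1)))"
    unfolding XA_def by (rule corr_eq[OF K1(1) K2]) (use Gc in \<open>simp add: XA_def\<close>)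
  also have "\<dots> = mtrace (\<sigma>l * ptrace_A dA dB (P (XA dA dB \<sigma>i \<rho> 1))) - mtrace (\<sigma>l * ptrace_A dA dB (P (XA dA dB \<sigma>i \<rho> (-1))))"
    using Gc by (simp add: trace_kron_A[OF sl(1)])
  also have "\<dots> = mtrace (\<sigma>l * S (ptrace_A dA dB (XA dA dB \<sigma>i \<rho> 1))) - mtrace (\<sigma>l * S (ptrace_A dA dB (XA dA dB \<sigma>i \<rho> (-1))))"
    by (simp add: ns_A[OF Pl Sl ns r Xp])
  also have "\<dots> = mtrace (\<sigma>l * (S (ptrace_A dA dB (XA dA dB \<sigma>i \<rho> 1)) - S (ptrace_A dA dB (XA dA dB \<sigma>i \<rho> (-1)))))"
    by (rule mtrace_minus_mult[OF sl(1)]) (use linear_opD(1)[OF Sl] in auto)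
  also have "\<dots> = mtrace (\<sigma>l * S (DA dA dB \<sigma>i \<rho>))"
    unfolding DA_def by (subst lin_minus[OF Sl]) auto
  finally show ?thesis .
qed

lemma DA_index: assumes s: "\<sigma> \<in> carrier_mat dA dA" and r: "\<rho> \<in> carrier_mat (dA*dB) (dA*dB)" and pq: "p < dB" "q < dB"
  shows "DA dA dB \<sigma> \<rho> $$ (p,q) = (1/2) * ((\<Sum>c<dA. \<Sum>c'<dA. \<sigma> $$ (c,c') * \<rho> $$ (c'*dB+p, c*dB+q))
      + (\<Sum>c<dA. \<Sum>c'<dA. \<rho> $$ (c*dB+p, c'*dB+q) * \<sigma> $$ (c',c)))"
proof -
  let ?N = "dA*dB"
  let ?K = "kron \<sigma> (1\<^sub>m dB)"
  have K: "?K \<in> carrier_mat ?N ?N" using kron_carrier[OF s, of "1\<^sub>m dB" dB dB] by simp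
  have "DA dA dB \<sigma> \<rho> $$ (p,q) = ptrace_A dA dB (XA dA dB \<sigma> \<rho> 1) $$ (p,q) - ptrace_A dA dB (XA dA dB \<sigma> \<rho> (-1)) $$ (p,q)"
    unfolding DA_def using pq by simp
  also have "\<dots> = (\<Sum>c<dA. XA dA dB \<sigma> \<rho> 1 $$ (c*dB+p, c*dB+q) - XA dA dB \<sigma> \<rho> (-1) $$ (c*dB+p, c*dB+q))"
    using pq by (simp add: ptrace_A_index sum_subtractf)
  also have "\<dots> = (\<Sum>c<dA. (1/2) * ((?K * \<rho>) $$ (c*dB+p, c*dB+q) + (\<rho> * ?K) $$ (c*dB+p, c*dB+q)))"
    unfolding XA_def using pq by (intro sum.cong refl meas_diff[OF K r]) (auto simp: idx_bound)
  also have "\<dots> = (1/2) * (ptrace_A dA dB (?K * \<rho>) $$ (p,q) + ptrace_A dA dB (\<rho> * ?K) $$ (p,q))"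
    by (simp only: ptrace_A_index[OF pq] sum.distrib[symmetric] sum_distrib_left)
  also have "\<dots> = (1/2) * ((\<Sum>c<dA. \<Sum>c'<dA. \<sigma> $$ (c,c') * \<rho> $$ (c'*dB+p, c*dB+q))
      + (\<Sum>c<dA. \<Sum>c'<dA. \<rho> $$ (c*dB+p, c'*dB+q) * \<sigma> $$ (c',c)))"
    by (simp add: ptA_Krho[OF s r pq] ptA_rhoK[OF s r pq])
  finally show ?thesis .
qed

lemma W_A: assumes r: "\<rho> \<in> carrier_mat (2^nA*2^nB) (2^nA*2^nB)" and a: "a < 2^nA" "a' < 2^nA" and pq: "p < 2^nB" "q < 2^nB"
  shows "(\<Sum>j\<in>pauli_idx nA. pauli_str j $$ (a,a') * DA (2^nA) (2^nB) (pauli_str j) \<rho> $$ (p,q))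
     = 2^nA * \<rho> $$ (a*2^nB+p, a'*2^nB+q)"
proof -
  let ?dA = "2^nA::nat" and ?dB = "2^nB::nat"
  let ?s = "\<lambda>j. pauli_str j"
  have sc: "?s j \<in> carrier_mat ?dA ?dA" if "j \<in> pauli_idx nA" for j
    using that pauli_str_carrier[of j] by (simp add: pauli_idx_def)
  have "(\<Sum>j\<in>pauli_idx nA. ?s j $$ (a,a') * DA ?dA ?dB (?s j) \<rho> $$ (p,q))
    = (\<Sum>j\<in>pauli_idx nA. (1/2) * (?s j $$ (a,a') * (\<Sum>c<?dA. \<Sum>c'<?dA. ?s j $$ (c,c') * \<rho> $$ (c'*?dB+p, c*?dB+q)))
        + (1/2) * (?s j $$ (a,a') * (\<Sum>c<?dA. \<Sum>c'<?dA. \<rho> $$ (c*?dB+p, c'*?dB+q) * ?s j $$ (c',c))))"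
    by (intro sum.cong refl) (simp add: DA_index[OF sc r pq] algebra_simps)
  also have "\<dots> = (1/2) * (\<Sum>c<?dA. \<Sum>c'<?dA. \<Sum>j\<in>pauli_idx nA. ?s j $$ (a,a') * (?s j $$ (c,c') * \<rho> $$ (c'*?dB+p, c*?dB+q)))
        + (1/2) * (\<Sum>c<?dA. \<Sum>c'<?dA. \<Sum>j\<in>pauli_idx nA. ?s j $$ (a,a') * (\<rho> $$ (c*?dB+p, c'*?dB+q) * ?s j $$ (c',c)))"
    by (simp only: sum.distrib sum_distrib_left[symmetric] swap3)
  also have "\<dots> = (1/2) * (\<Sum>c<?dA. \<Sum>c'<?dA. \<rho> $$ (c'*?dB+p, c*?dB+q) * (if c = a' \<and> c' = a then 2^nA else 0))
        + (1/2) * (\<Sum>c<?dA. \<Sum>c'<?dA. \<rho> $$ (c*?dB+p, c'*?dB+q) * (if c = a \<and> c' = a' then 2^nA else 0))"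
  proof -
    have e1: "(\<Sum>j\<in>pauli_idx nA. ?s j $$ (a,a') * (?s j $$ (c,c') * \<rho> $$ (c'*?dB+p, c*?dB+q)))
        = \<rho> $$ (c'*?dB+p, c*?dB+q) * (if c = a' \<and> c' = a then 2^nA else 0)" if "c < ?dA" "c' < ?dA" for c c'
    proof -
      have "(\<Sum>j\<in>pauli_idx nA. ?s j $$ (a,a') * (?s j $$ (c,c') * \<rho> $$ (c'*?dB+p, c*?dB+q)))
          = (\<Sum>j\<in>pauli_idx nA. ?s j $$ (a,a') * ?s j $$ (c,c')) * \<rho> $$ (c'*?dB+p, c*?dB+q)"
        by (simp add: sum_distrib_right mult_ac)
      also have "\<dots> = \<rho> $$ (c'*?dB+p, c*?dB+q) * (if c = a' \<and> c' = a then 2^nA else 0)"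
        using pauli_sum[OF a that] by auto
      finally show ?thesis .
    qed
    have e2: "(\<Sum>j\<in>pauli_idx nA. ?s j $$ (a,a') * (\<rho> $$ (c*?dB+p, c'*?dB+q) * ?s j $$ (c',c)))
        = \<rho> $$ (c*?dB+p, c'*?dB+q) * (if c = a \<and> c' = a' then 2^nA else 0)" if "c < ?dA" "c' < ?dA" for c c'
    proof -
      have "(\<Sum>j\<in>pauli_idx nA. ?s j $$ (a,a') * (\<rho> $$ (c*?dB+p, c'*?dB+q) * ?s j $$ (c',c)))
          = (\<Sum>j\<in>pauli_idx nA. ?s j $$ (a,a') * ?s j $$ (c',c)) * \<rho> $$ (c*?dB+p, c'*?dB+q)"
        by (simp add: sum_distrib_right mult_ac)
      also have "\<dots> = \<rho> $$ (c*?dB+p, c'*?dB+q) * (if c = a \<and> c' = a' then 2^nA else 0)"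
        using pauli_sum[OF a that(2) that(1)] by auto
      finally show ?thesis .
    qed
    show ?thesis using e1 e2 by simp
  qed
  also have "\<dots> = (1/2) * (\<rho> $$ (a*?dB+p, a'*?dB+q) * 2^nA) + (1/2) * (\<rho> $$ (a*?dB+p, a'*?dB+q) * 2^nA)"
    using double_delta[OF a(1) a(2), of "\<lambda>c c'. \<rho> $$ (c'*?dB+p, c*?dB+q)" "2^nA"]
      double_delta[OF a(2) a(1), of "\<lambda>c c'. \<rho> $$ (c*?dB+p, c'*?dB+q)" "2^nA"] by simp
  also have "\<dots> = 2^nA * \<rho> $$ (a*?dB+p, a'*?dB+q)" by simp
  finally show ?thesis .
qed

lemma R_A1B2_ampl: assumes Pcp: "cp_map (2^nA*2^nB) (2^nA*2^nB) P" and Sl: "linear_op (2^nB) (2^nB) S"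
  and ns: "\<forall>\<rho>. density (2^nA*2^nB) \<rho> \<longrightarrow> ptrace_A (2^nA) (2^nB) (P \<rho>) = S (ptrace_A (2^nA) (2^nB) \<rho>)"
  and r: "density (2^nA*2^nB) \<rho>"
  shows "R_A1B2 nA nB P \<rho> = ampl (2^nA) (2^nB) (2^nB) S \<rho>"
proof (rule eq_matI)
  let ?dA = "2^nA::nat" and ?dB = "2^nB::nat"
  have rc: "\<rho> \<in> carrier_mat (?dA*?dB) (?dA*?dB)" using r unfolding density_def psd_def by auto
  fix i i' assume "i < dim_row (ampl ?dA ?dB ?dB S \<rho>)" "i' < dim_col (ampl ?dA ?dB ?dB S \<rho>)"
  then have ii: "i < ?dA * ?dB" "i' < ?dA * ?dB" unfolding ampl_def by auto
  define a where "a = i div ?dB"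
  define b where "b = i mod ?dB"
  define a' where "a' = i' div ?dB"
  define b' where "b' = i' mod ?dB"
  have ab: "a < ?dA" "b < ?dB" "a' < ?dA" "b' < ?dB" unfolding a_def b_def a'_def b'_def using ii
    by (auto simp: less_mult_imp_div_less)
  let ?D = "\<lambda>j. DA ?dA ?dB (pauli_str j) \<rho>"
  have TD: "S (?D j) \<in> carrier_mat ?dB ?dB" for j using linear_opD(1)[OF Sl] by simp
  have cor: "complex_of_real (corr (?dA*?dB) P (kron (pauli_str j) (1\<^sub>m ?dB)) (kron (1\<^sub>m ?dA) (pauli_str k)) \<rho>)
     = mtrace (pauli_str k * S (?D j))" if "j \<in> pauli_idx nA" "k \<in> pauli_idx nB" for j k
    by (rule corrA[OF Pcp Sl ns r]) (use that pauli_idx_carrier pauli_str_herm in auto)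
  have "R_A1B2 nA nB P \<rho> $$ (i,i') = (\<Sum>j\<in>pauli_idx nA. \<Sum>k\<in>pauli_idx nB.
      complex_of_real (corr (?dA*?dB) P (kron (pauli_str j) (1\<^sub>m ?dB)) (kron (1\<^sub>m ?dA) (pauli_str k)) \<rho> / 2^(nA+nB))
       * kron (pauli_str j) (pauli_str k) $$ (i,i'))"
    unfolding R_A1B2_def using ii by simp
  also have "\<dots> = (\<Sum>j\<in>pauli_idx nA. pauli_str j $$ (a,a') / 2^nA * ((\<Sum>k\<in>pauli_idx nB. mtrace (pauli_str k * S (?D j)) * pauli_str k $$ (b,b')) / 2^nB))"
  proof (rule sum.cong[OF refl])
    fix j assume j: "j \<in> pauli_idx nA"
    have lj: "length j = nA" using j by (simp add: pauli_idx_def)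
    show "(\<Sum>k\<in>pauli_idx nB. complex_of_real (corr (?dA*?dB) P (kron (pauli_str j) (1\<^sub>m ?dB)) (kron (1\<^sub>m ?dA) (pauli_str k)) \<rho> / 2^(nA+nB))
       * kron (pauli_str j) (pauli_str k) $$ (i,i'))
      = pauli_str j $$ (a,a') / 2^nA * ((\<Sum>k\<in>pauli_idx nB. mtrace (pauli_str k * S (?D j)) * pauli_str k $$ (b,b')) / 2^nB)"
      unfolding sum_divide_distrib sum_distrib_left
    proof (rule sum.cong[OF refl])
      fix k assume k: "k \<in> pauli_idx nB"
      have lk: "length k = nB" using k by (simp add: pauli_idx_def)
      have "kron (pauli_str j) (pauli_str k) $$ (i,i') = pauli_str j $$ (a,a') * pauli_str k $$ (b,b')"
        using ii lj lk unfolding a_def b_def a'_def b'_def by (simp add: kron_index)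
      moreover have "complex_of_real (corr (?dA*?dB) P (kron (pauli_str j) (1\<^sub>m ?dB)) (kron (1\<^sub>m ?dA) (pauli_str k)) \<rho> / 2^(nA+nB))
          = mtrace (pauli_str k * S (?D j)) / (2^nA * 2^nB)"
        using cor[OF j k] by (simp add: power_add)
      ultimately show "complex_of_real (corr (?dA*?dB) P (kron (pauli_str j) (1\<^sub>m ?dB)) (kron (1\<^sub>m ?dA) (pauli_str k)) \<rho> / 2^(nA+nB))
       * kron (pauli_str j) (pauli_str k) $$ (i,i') = pauli_str j $$ (a,a') / 2^nA * (mtrace (pauli_str k * S (?D j)) * pauli_str k $$ (b,b') / 2^nB)"
        by (simp add: field_simps)
    qed
  qed
  also have "\<dots> = (\<Sum>j\<in>pauli_idx nA. pauli_str j $$ (a,a') / 2^nA * S (?D j) $$ (b,b'))"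
    by (intro sum.cong refl) (simp add: pauli_complete[OF TD ab(2) ab(4)])
  also have "\<dots> = mat ?dB ?dB (\<lambda>(p,q). \<Sum>j\<in>pauli_idx nA. pauli_str j $$ (a,a') / 2^nA * S (?D j) $$ (p,q)) $$ (b,b')"
    using ab by simp
  also have "mat ?dB ?dB (\<lambda>(p,q). \<Sum>j\<in>pauli_idx nA. pauli_str j $$ (a,a') / 2^nA * S (?D j) $$ (p,q))
      = S (mat ?dB ?dB (\<lambda>(p,q). \<Sum>j\<in>pauli_idx nA. pauli_str j $$ (a,a') / 2^nA * ?D j $$ (p,q)))"
    by (rule lin_sum[symmetric, OF Sl]) auto
  also have "mat ?dB ?dB (\<lambda>(p,q). \<Sum>j\<in>pauli_idx nA. pauli_str j $$ (a,a') / 2^nA * ?D j $$ (p,q))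
      = mat ?dB ?dB (\<lambda>(p,q). \<rho> $$ (a*?dB+p, a'*?dB+q))"
  proof (rule eq_matI)
    fix p q assume "p < dim_row (mat ?dB ?dB (\<lambda>(p,q). \<rho> $$ (a*?dB+p, a'*?dB+q)))"
      "q < dim_col (mat ?dB ?dB (\<lambda>(p,q). \<rho> $$ (a*?dB+p, a'*?dB+q)))"
    then have pq: "p < ?dB" "q < ?dB" by auto
    have "(\<Sum>j\<in>pauli_idx nA. pauli_str j $$ (a,a') / 2^nA * ?D j $$ (p,q))
        = (\<Sum>j\<in>pauli_idx nA. pauli_str j $$ (a,a') * ?D j $$ (p,q)) / 2^nA"
      by (simp add: sum_divide_distrib)
    also have "\<dots> = \<rho> $$ (a*?dB+p, a'*?dB+q)" using W_A[OF rc ab(1) ab(3) pq] by simp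
    finally show "mat ?dB ?dB (\<lambda>(p,q). \<Sum>j\<in>pauli_idx nA. pauli_str j $$ (a,a') / 2^nA * ?D j $$ (p,q)) $$ (p,q)
      = mat ?dB ?dB (\<lambda>(p,q). \<rho> $$ (a*?dB+p, a'*?dB+q)) $$ (p,q)" using pq by simp
  qed auto
  also have "S (mat ?dB ?dB (\<lambda>(p,q). \<rho> $$ (a*?dB+p, a'*?dB+q))) $$ (b,b')
      = ampl ?dA ?dB ?dB S \<rho> $$ (i,i')"
    unfolding ampl_def using ii unfolding a_def b_def a'_def b'_def by simp
  finally show "R_A1B2 nA nB P \<rho> $$ (i,i') = ampl ?dA ?dB ?dB S \<rho> $$ (i,i')" .
next
  show "dim_row (R_A1B2 nA nB P \<rho>) = dim_row (ampl (2^nA) (2^nB) (2^nB) S \<rho>)"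
    unfolding R_A1B2_def ampl_def by simp
  show "dim_col (R_A1B2 nA nB P \<rho>) = dim_col (ampl (2^nA) (2^nB) (2^nB) S \<rho>)"
    unfolding R_A1B2_def ampl_def by simp
qed

theorem corollary1:
  fixes nA nB :: nat
    and P :: "complex mat \<Rightarrow> complex mat"
    and \<rho> :: "complex mat"
  assumes "nA \<ge> 1" and "nB \<ge> 1"
    and "cptp_map (2^nA * 2^nB) (2^nA * 2^nB) P"
    and "no_signalling (2^nA) (2^nB) P"
    and "density (2^nA * 2^nB) \<rho>"
  shows "psd (2^nB * 2^nA) (R_B1A2 nA nB P \<rho>) \<and> psd (2^nA * 2^nB) (R_A1B2 nA nB P \<rho>) \<and>
         pdm_neg (2^nB * 2^nA) (R_B1A2 nA nB P \<rho>) = 0 \<and>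
         pdm_neg (2^nA * 2^nB) (R_A1B2 nA nB P \<rho>) = 0"
proof -
  let ?dA = "2^nA::nat" and ?dB = "2^nB::nat"
  have r: "density (?dA*?dB) \<rho>" using assms(5) .
  have rp: "psd (?dA*?dB) \<rho>" and tr: "mtrace \<rho> = 1" using r unfolding density_def by auto
  have rc: "\<rho> \<in> carrier_mat (?dA*?dB) (?dA*?dB)" using rp unfolding psd_def by auto
  have Pcp: "cp_map (?dA*?dB) (?dA*?dB) P" and TP: "\<And>X. X \<in> carrier_mat (?dA*?dB) (?dA*?dB) \<Longrightarrow> mtrace (P X) = mtrace X"
    using assms(3) unfolding cptp_map_def by auto
  have Pl: "linear_op (?dA*?dB) (?dA*?dB) P" using Pcp unfolding cp_map_def by auto
  have Prc: "P \<rho> \<in> carrier_mat (?dA*?dB) (?dA*?dB)" using linear_opD(1)[OF Pl rc] .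
  obtain T S where Tcp: "cp_map ?dA ?dA T" and Scp: "cp_map ?dB ?dB S"
    and ns: "\<forall>\<rho>. density (?dA*?dB) \<rho> \<longrightarrow> ptrace_B ?dA ?dB (P \<rho>) = T (ptrace_B ?dA ?dB \<rho>) \<and>
        ptrace_A ?dA ?dB (P \<rho>) = S (ptrace_A ?dA ?dB \<rho>)"
    using assms(4) unfolding no_signalling_def by blast
  have nsB: "\<forall>\<rho>. density (?dA*?dB) \<rho> \<longrightarrow> ptrace_B ?dA ?dB (P \<rho>) = T (ptrace_B ?dA ?dB \<rho>)" using ns by blast
  have nsA: "\<forall>\<rho>. density (?dA*?dB) \<rho> \<longrightarrow> ptrace_A ?dA ?dB (P \<rho>) = S (ptrace_A ?dA ?dB \<rho>)" using ns by blast
  have Tl: "linear_op ?dA ?dA T" using Tcp unfolding cp_map_def by auto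
  have Sl: "linear_op ?dB ?dB S" using Scp unfolding cp_map_def by auto
  have R1: "R_B1A2 nA nB P \<rho> = ampl ?dB ?dA ?dA T (swapAB ?dA ?dB \<rho>)" by (rule R_B1A2_ampl[OF Pcp Tl nsB r])
  have R2: "R_A1B2 nA nB P \<rho> = ampl ?dA ?dB ?dB S \<rho>" by (rule R_A1B2_ampl[OF Pcp Sl nsA r])
  have sw: "psd (?dB*?dA) (swapAB ?dA ?dB \<rho>)" by (rule swapAB_psd[OF rp])
  have swc: "swapAB ?dA ?dB \<rho> \<in> carrier_mat (?dB*?dA) (?dB*?dA)" using sw unfolding psd_def by auto
  have p1: "psd (?dB*?dA) (R_B1A2 nA nB P \<rho>)" unfolding R1 using Tcp sw unfolding cp_map_def by blast
  have p2: "psd (?dA*?dB) (R_A1B2 nA nB P \<rho>)" unfolding R2 using Scp rp unfolding cp_map_def by blast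
  have e1: "mat ?dA ?dA (\<lambda>(p,q). \<Sum>b<?dB. 1 * mat ?dA ?dA (\<lambda>(p,q). swapAB ?dA ?dB \<rho> $$ (b*?dA+p, b*?dA+q)) $$ (p,q))
      = ptrace_B ?dA ?dB \<rho>"
    by (rule eq_matI) (auto simp: ptrace_B_index swapAB_index)
  have t1: "mtrace (R_B1A2 nA nB P \<rho>) = 1"
  proof -
    have "mtrace (R_B1A2 nA nB P \<rho>) = mtrace (T (ptrace_B ?dA ?dB \<rho>))"
      unfolding R1 mtrace_ampl[OF Tl swc] e1 ..
    also have "\<dots> = mtrace (ptrace_B ?dA ?dB (P \<rho>))" using nsB r by simp
    also have "\<dots> = mtrace (P \<rho>)" by (rule mtrace_ptrace_B[OF Prc])
    also have "\<dots> = 1" using TP[OF rc] tr by simp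
    finally show ?thesis .
  qed
  have e2: "mat ?dB ?dB (\<lambda>(p,q). \<Sum>a<?dA. 1 * mat ?dB ?dB (\<lambda>(p,q). \<rho> $$ (a*?dB+p, a*?dB+q)) $$ (p,q))
      = ptrace_A ?dA ?dB \<rho>"
    by (rule eq_matI) (auto simp: ptrace_A_index)
  have t2: "mtrace (R_A1B2 nA nB P \<rho>) = 1"
  proof -
    have "mtrace (R_A1B2 nA nB P \<rho>) = mtrace (S (ptrace_A ?dA ?dB \<rho>))"
      unfolding R2 mtrace_ampl[OF Sl rc] e2 ..
    also have "\<dots> = mtrace (ptrace_A ?dA ?dB (P \<rho>))" using nsA r by simp
    also have "\<dots> = mtrace (P \<rho>)" by (rule mtrace_ptrace_A[OF Prc])
    also have "\<dots> = 1" using TP[OF rc] tr by simp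
    finally show ?thesis .
  qed
  have n1: "pdm_neg (?dB*?dA) (R_B1A2 nA nB P \<rho>) = 0"
    unfolding pdm_neg_def msqrt_psd[OF p1] t1 by simp
  have n2: "pdm_neg (?dA*?dB) (R_A1B2 nA nB P \<rho>) = 0"
    unfolding pdm_neg_def msqrt_psd[OF p2] t2 by simp
  show ?thesis using p1 p2 n1 n2 by simp
qed

end
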